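(* Let $n\in\mathbb N$. (a) Suppose that for every finite set $I$ we are given a covariant $n$-tensor field $\tilde\Theta^n_I$ on $\mathcal M_+(I)$. Then $(\tilde\Theta^n_I)$ is a congruent family if and only if there are functions $a_{\mathbf P}:(0,\infty)\to\mathbb R$, $\mathbf P$ ranging over all partitions of $\{1,\dots,n\}$, such that $(\tilde\Theta^n_I)_\mu=\sum_{\mathbf P}a_{\mathbf P}(\|\mu\|)(\tau^{\mathbf P}_I)_\mu$ for all finite $I$ and $\mu\in\mathcal M_+(I)$. (b) Suppose that for every finite set $I$ we are given a covariant $n$-tensor field $\Theta^n_I$ on $\mathcal P_+(I)$. Then $(\Theta^n_I)$ is a congruent family if and only if there are constants $c_{\mathbf P}\in\mathbb R$, $\mathbf P=\{P_1,\dots,P_l\}$ ranging over the partitions of $\{1,\dots,n\}$ with $|P_i|>1$ for all $i$, such that $\Theta^n_I=\sum_{\mathbf P}c_{\mathbf P}\,\tau^{\mathbf P}_I|_{\mathcal P_+(I)}$ for all finite $I$.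
   Context: For a finite set $I$, $\mathcal S(I)=\{\sum_{i\in I}x_i\delta_i:x_i\in\mathbb R\}$ (signed measures), $\|\sum x_i\delta_i\|=\sum|x_i|$, $\mathcal M_+(I)=\{\sum\mu_i\delta_i:\mu_i>0\}$ (open in $\mathcal S(I)$, tangent space $\mathcal S(I)$), $\mathcal P_+(I)=\{\mu\in\mathcal M_+(I):\sum\mu_i=1\}$ (tangent space $\mathcal S_0(I)=\{\sum x_i\delta_i:\sum x_i=0\}$). A covariant $n$-tensor field is a continuously varying family of $n$-multilinear forms on the tangent spaces. For $\mu=\sum\mu_i\delta_i\in\mathcal M_+(I)$ and $V_k=\sum_iV_k^i\delta_i$, the canonical tensor is $(\tau^m_I)_\mu(V_1,\dots,V_m)=\sum_{i\in I}\mu_i^{1-m}V_1^i\cdots V_m^i$; for a partition $\mathbf P=\{P_1,\dots,P_l\}$ of $\{1,\dots,n\}$, $(\tau^{\mathbf P}_I)_\mu(V_1,\dots,V_n)=\prod_{i=1}^l(\tau^{|P_i|}_I)_\mu((V_j)_{j\in P_i})$. A Markov kernel $K:I\to\mathcal P(I')$ between finite sets is given by $K(i)=\sum_{i'}K^i_{i'}\delta_{i'}$ with $K^i_{i'}\ge0$, $\sum_{i'}K^i_{i'}=1$, and $K_*(\sum x_i\delta_i)=\sum_{i,i'}K^i_{i'}x_i\delta_{i'}$; it is congruent if there is a map $\kappa:I'\to I$ with $K^i_{i'}=0$ whenever $\kappa(i')\ne i$. The family $(\tilde\Theta^n_I)$ is congruent if $K^*\tilde\Theta^n_{I'}=\tilde\Theta^n_I$,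 i.e. $(\tilde\Theta^n_{I'})_{K_*\mu}(K_*V_1,\dots,K_*V_n)=(\tilde\Theta^n_I)_\mu(V_1,\dots,V_n)$, for every congruent Markov kernel $K:I\to\mathcal P(I')$ between finite sets for which $K_*$ maps $\mathcal M_+(I)$ into $\mathcal M_+(I')$ (so that the pullback is defined); analogously on $\mathcal P_+(I)$ with tangent vectors in $\mathcal S_0(I)$. *)

theory Defs
  imports "HOL-Analysis.Analysis" "HOL-Library.Disjoint_Sets"
begin

text \<open>Finite sets I are finite nonempty subsets of nat. A (signed) measure on I is a
function nat => real vanishing outside I. Tangent vectors V_1..V_n are given as a list of length n.\<close>

definition Sm :: "nat set \<Rightarrow> (nat \<Rightarrow> real) set" where
  "Sm I = {x. \<forall>i. i \<notin> I \<longrightarrow> x i = 0}"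

definition S0 :: "nat set \<Rightarrow> (nat \<Rightarrow> real) set" where
  "S0 I = {x \<in> Sm I. (\<Sum>i\<in>I. x i) = 0}"

definition Mplus :: "nat set \<Rightarrow> (nat \<Rightarrow> real) set" where
  "Mplus I = {mu \<in> Sm I. \<forall>i\<in>I. mu i > 0}"

definition Pplus :: "nat set \<Rightarrow> (nat \<Rightarrow> real) set" where
  "Pplus I = {mu \<in> Mplus I. (\<Sum>i\<in>I. mu i) = 1}"

definition mnorm :: "nat set \<Rightarrow> (nat \<Rightarrow> real) \<Rightarrow> real" where
  "mnorm I x = (\<Sum>i\<in>I. \<bar>x i\<bar>)"

definition tensor_field ::
  "(nat \<Rightarrow> real) set \<Rightarrow> (nat \<Rightarrow> real) set \<Rightarrow> nat
     \<Rightarrow> ((nat \<Rightarrow> real) \<Rightarrow> (nat \<Rightarrow> real) list \<Rightarrow> real) \<Rightarrow> bool" where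
  "tensor_field U T n Th \<longleftrightarrow>
     (\<forall>Vs. length Vs = n \<and> set Vs \<subseteq> T \<longrightarrow> continuous_on U (\<lambda>mu. Th mu Vs)) \<and>
     (\<forall>mu\<in>U. \<forall>Vs k v w a b. length Vs = n \<and> set Vs \<subseteq> T \<and> k < n \<and> v \<in> T \<and> w \<in> T \<longrightarrow>
        Th mu (Vs[k := (\<lambda>i. a * v i + b * w i)]) = a * Th mu (Vs[k := v]) + b * Th mu (Vs[k := w]))"

definition tau_block :: "nat set \<Rightarrow> (nat \<Rightarrow> real) \<Rightarrow> (nat \<Rightarrow> real) list \<Rightarrow> nat set \<Rightarrow> real" where
  "tau_block I mu Vs B = (\<Sum>i\<in>I. mu i powi (1 - int (card B)) * (\<Prod>k\<in>B. (Vs ! k) i))"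

definition tau_part :: "nat set \<Rightarrow> (nat \<Rightarrow> real) \<Rightarrow> (nat \<Rightarrow> real) list \<Rightarrow> nat set set \<Rightarrow> real" where
  "tau_part I mu Vs P = (\<Prod>B\<in>P. tau_block I mu Vs B)"

text \<open>Partitions of the index set {0..<n} (playing the role of {1,...,n}).\<close>
definition partitions :: "nat \<Rightarrow> nat set set set" where
  "partitions n = {P. partition_on {0..<n} P}"

definition congruent_kernel :: "nat set \<Rightarrow> nat set \<Rightarrow> (nat \<Rightarrow> nat \<Rightarrow> real) \<Rightarrow> bool" where
  "congruent_kernel I I' K \<longleftrightarrow>
     (\<forall>i\<in>I. \<forall>i'\<in>I'. 0 \<le> K i i') \<and> (\<forall>i\<in>I. (\<Sum>i'\<in>I'. K i i') = 1) \<and>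
     (\<exists>\<kappa>. \<kappa> ` I' \<subseteq> I \<and> (\<forall>i\<in>I. \<forall>i'\<in>I'. \<kappa> i' \<noteq> i \<longrightarrow> K i i' = 0))"

definition push :: "nat set \<Rightarrow> nat set \<Rightarrow> (nat \<Rightarrow> nat \<Rightarrow> real) \<Rightarrow> (nat \<Rightarrow> real) \<Rightarrow> (nat \<Rightarrow> real)" where
  "push I I' K x = (\<lambda>i'. if i' \<in> I' then (\<Sum>i\<in>I. K i i' * x i) else 0)"

definition congruent_family_M :: "nat \<Rightarrow> (nat set \<Rightarrow> (nat \<Rightarrow> real) \<Rightarrow> (nat \<Rightarrow> real) list \<Rightarrow> real) \<Rightarrow> bool" where
  "congruent_family_M n Th \<longleftrightarrow>
     (\<forall>I I' K. finite I \<and> I \<noteq> {} \<and> finite I' \<and> I' \<noteq> {} \<and> congruent_kernel I I' K \<and>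
        push I I' K ` Mplus I \<subseteq> Mplus I' \<longrightarrow>
        (\<forall>mu\<in>Mplus I. \<forall>Vs. length Vs = n \<and> set Vs \<subseteq> Sm I \<longrightarrow>
           Th I' (push I I' K mu) (map (push I I' K) Vs) = Th I mu Vs))"

definition congruent_family_P :: "nat \<Rightarrow> (nat set \<Rightarrow> (nat \<Rightarrow> real) \<Rightarrow> (nat \<Rightarrow> real) list \<Rightarrow> real) \<Rightarrow> bool" where
  "congruent_family_P n Th \<longleftrightarrow>
     (\<forall>I I' K. finite I \<and> I \<noteq> {} \<and> finite I' \<and> I' \<noteq> {} \<and> congruent_kernel I I' K \<and>
        push I I' K ` Pplus I \<subseteq> Pplus I' \<longrightarrow>
        (\<forall>mu\<in>Pplus I. \<forall>Vs. length Vs = n \<and> set Vs \<subseteq> S0 I \<longrightarrow>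
           Th I' (push I I' K mu) (map (push I I' K) Vs) = Th I mu Vs))"

end

theory Submission
  imports Defs
begin

definition ml :: "(nat\<Rightarrow>real) set \<Rightarrow> nat \<Rightarrow> ((nat\<Rightarrow>real) list \<Rightarrow> real) \<Rightarrow> bool" where
 "ml T n F \<longleftrightarrow> (\<forall>Vs k v w a b. length Vs = n \<and> set Vs \<subseteq> T \<and> k < n \<and> v \<in> T \<and> w \<in> T \<longrightarrow>
     F (Vs[k := (\<lambda>i. a * v i + b * w i)]) = a * F (Vs[k := v]) + b * F (Vs[k := w]))"

definition lin :: "(nat\<Rightarrow>real) set \<Rightarrow> bool" where
 "lin T \<longleftrightarrow> (\<forall>v w a b. v \<in> T \<longrightarrow> w \<in> T \<longrightarrow> (\<lambda>i. a * v i + b * w i) \<in> T) \<and> (\<lambda>i. 0) \<in> T"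

lemma tensor_field_ml: "tensor_field U T n Th \<Longrightarrow> mu \<in> U \<Longrightarrow> ml T n (Th mu)"
  unfolding tensor_field_def ml_def by blast

lemma lin_Sm: "lin (Sm I)" unfolding lin_def Sm_def by auto
lemma lin_S0: "lin (S0 I)" unfolding lin_def S0_def Sm_def by (auto simp: sum.distrib sum_distrib_left[symmetric])

lemma lin_sum: assumes "lin T" "finite J" "\<And>j. j\<in>J \<Longrightarrow> b j \<in> T" shows "(\<lambda>i. \<Sum>j\<in>J. c j * b j i) \<in> T"
  using assms(2,3)
proof (induction J rule: finite_induct)
  case empty then show ?case using assms(1) by (simp add: lin_def)
next
  case (insert x F)
  have "(\<lambda>i. c x * b x i + 1 * (\<Sum>j\<in>F. c j * b j i)) \<in> T"
    using insert assms(1) unfolding lin_def by blast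
  then show ?case using insert by simp
qed

lemma ml_sum:
  assumes "ml T n F" "lin T" "length Vs = n" "set Vs \<subseteq> T" "k < n" "finite J" "\<And>j. j\<in>J \<Longrightarrow> b j \<in> T"
  shows "F (Vs[k := (\<lambda>i. \<Sum>j\<in>J. c j * b j i)]) = (\<Sum>j\<in>J. c j * F (Vs[k := b j]))"
  using assms(6,7)
proof (induction J rule: finite_induct)
  case empty
  have z: "(\<lambda>i. 0::real) \<in> T" using assms(2) by (simp add: lin_def)
  have "F (Vs[k := (\<lambda>i. 0 * (0::real) + 0 * 0)]) = 0 * F (Vs[k := (\<lambda>i. 0)]) + 0 * F (Vs[k := (\<lambda>i. 0)])"
    using assms(1,3,4,5) z unfolding ml_def by blast
  then show ?case by simp
next
  case (insert x J)
  have s: "(\<lambda>i. \<Sum>j\<in>J. c j * b j i) \<in> T" using lin_sum[OF assms(2) insert(1)] insert by blast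
  have "F (Vs[k := (\<lambda>i. c x * b x i + 1 * (\<Sum>j\<in>J. c j * b j i))]) =
      c x * F (Vs[k := b x]) + 1 * F (Vs[k := (\<lambda>i. \<Sum>j\<in>J. c j * b j i)])"
    using assms(1,3,4,5) s insert.prems unfolding ml_def by blast
  then show ?case using insert by simp
qed

lemma ml_expand_gen:
  assumes "ml T n F" "lin T" "length Vs = n" "set Vs \<subseteq> T" "finite J" "\<And>j. j\<in>J \<Longrightarrow> b j \<in> T"
    and V: "\<And>k. k < n \<Longrightarrow> Vs ! k = (\<lambda>i. \<Sum>j\<in>J. x k j * b j i)"
  shows "m \<le> n \<Longrightarrow> F Vs = (\<Sum>g\<in>PiE {0..<m} (\<lambda>_. J). (\<Prod>k<m. x k (g k)) *
            F (map (\<lambda>k. if k < m then b (g k) else Vs ! k) [0..<n]))"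
proof (induction m)
  case 0
  have "map (\<lambda>k. Vs ! k) [0..<n] = Vs" using assms(3) by (metis map_nth)
  then show ?case by simp
next
  case (Suc m)
  let ?W = "\<lambda>g. map (\<lambda>k. if k < m then b (g k) else Vs ! k) [0..<n]"
  have step: "F (?W g) = (\<Sum>j\<in>J. x m j * F (map (\<lambda>k. if k < Suc m then b ((g(m := j)) k) else Vs ! k) [0..<n]))"
    if g: "g \<in> PiE {0..<m} (\<lambda>_. J)" for g
  proof -
    have WT: "set (?W g) \<subseteq> T" using g assms(4,6) Suc.prems assms(3) by (auto simp: PiE_iff)
    have "?W g = (?W g)[m := (\<lambda>i. \<Sum>j\<in>J. x m j * b j i)]"
      using Suc.prems V[of m] by (intro nth_equalityI) (auto simp: nth_list_update)
    then have "F (?W g) = (\<Sum>j\<in>J. x m j * F ((?W g)[m := b j]))"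
      using ml_sum[where T=T and n=n and F=F and Vs="?W g" and k=m and J=J and b=b and c="x m"] assms(1,2,3,5,6) WT Suc.prems by simp
    also have "\<dots> = (\<Sum>j\<in>J. x m j * F (map (\<lambda>k. if k < Suc m then b ((g(m := j)) k) else Vs ! k) [0..<n]))"
      by (intro sum.cong refl arg_cong2[where f="(*)"] arg_cong[where f=F] nth_equalityI)
         (use Suc.prems in \<open>auto simp: nth_list_update\<close>)
    finally show ?thesis .
  qed
  have "F Vs = (\<Sum>g\<in>PiE {0..<m} (\<lambda>_. J). (\<Prod>k<m. x k (g k)) * F (?W g))"
    using Suc by simp
  also have "\<dots> = (\<Sum>g\<in>PiE {0..<m} (\<lambda>_. J). \<Sum>j\<in>J. (\<Prod>k<m. x k (g k)) * x m j *
        F (map (\<lambda>k. if k < Suc m then b ((g(m := j)) k) else Vs ! k) [0..<n]))"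
    by (intro sum.cong refl) (simp add: step sum_distrib_left mult.assoc)
  also have "\<dots> = (\<Sum>(j,g)\<in>J \<times> PiE {0..<m} (\<lambda>_. J). (\<Prod>k<m. x k (g k)) * x m j *
        F (map (\<lambda>k. if k < Suc m then b ((g(m := j)) k) else Vs ! k) [0..<n]))"
    by (subst sum.swap) (simp add: sum.cartesian_product)
  also have "\<dots> = (\<Sum>g\<in>PiE {0..<Suc m} (\<lambda>_. J). (\<Prod>k<Suc m. x k (g k)) *
            F (map (\<lambda>k. if k < Suc m then b (g k) else Vs ! k) [0..<n]))"
  proof (rule sum.reindex_bij_witness[of _ "\<lambda>g. (g m, g(m := undefined))" "\<lambda>(j,g). g(m := j)"])
    fix a assume "a \<in> J \<times> PiE {0..<m} (\<lambda>_. J)"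
    then obtain j g where a: "a = (j,g)" "j \<in> J" "g \<in> PiE {0..<m} (\<lambda>_. J)" by auto
    have gm: "g m = undefined" using a(3) by (auto simp: PiE_iff extensional_def)
    show "(\<lambda>(j, g). g(m := j)) a \<in> PiE {0..<Suc m} (\<lambda>_. J)" using a by (auto simp: PiE_iff extensional_def)
    show "((\<lambda>(j, g). g(m := j)) a m, ((\<lambda>(j, g). g(m := j)) a)(m := undefined)) = a"
      using a gm by auto
    have "(\<Prod>k<Suc m. x k ((g(m := j)) k)) = (\<Prod>k<m. x k (g k)) * x m j"
      by (simp add: lessThan_Suc)
    then show "(\<Prod>k<Suc m. x k ((\<lambda>(j, g). g(m := j)) a k)) *
          F (map (\<lambda>k. if k < Suc m then b ((\<lambda>(j, g). g(m := j)) a k) else Vs ! k) [0..<n]) =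
         (case a of (j, g) \<Rightarrow> (\<Prod>k<m. x k (g k)) * x m j *
          F (map (\<lambda>k. if k < Suc m then b ((g(m := j)) k) else Vs ! k) [0..<n]))"
      unfolding a(1) using \<open>(\<Prod>k<Suc m. x k ((g(m := j)) k)) = _\<close> by (simp cong: if_cong)
  next
    fix g assume g: "g \<in> PiE {0..<Suc m} (\<lambda>_. J)"
    show "(\<lambda>(j, g). g(m := j)) (g m, g(m := undefined)) = g" by auto
    show "(g m, g(m := undefined)) \<in> J \<times> PiE {0..<m} (\<lambda>_. J)" using g by (auto simp: PiE_iff extensional_def)
  qed
  finally show ?case .
qed

lemma ml_expand:
  assumes "ml T n F" "lin T" "length Vs = n" "set Vs \<subseteq> T" "finite J" "\<And>j. j\<in>J \<Longrightarrow> b j \<in> T"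
    and V: "\<And>k. k < n \<Longrightarrow> Vs ! k = (\<lambda>i. \<Sum>j\<in>J. x k j * b j i)"
  shows "F Vs = (\<Sum>g\<in>PiE {0..<n} (\<lambda>_. J). (\<Prod>k<n. x k (g k)) * F (map (\<lambda>k. b (g k)) [0..<n]))"
proof -
  have "F Vs = (\<Sum>g\<in>PiE {0..<n} (\<lambda>_. J). (\<Prod>k<n. x k (g k)) *
            F (map (\<lambda>k. if k < n then b (g k) else Vs ! k) [0..<n]))"
    using ml_expand_gen[OF assms, of n] by simp
  also have "\<dots> = (\<Sum>g\<in>PiE {0..<n} (\<lambda>_. J). (\<Prod>k<n. x k (g k)) * F (map (\<lambda>k. b (g k)) [0..<n]))"
    by (intro sum.cong refl arg_cong2[where f="(*)"] arg_cong[where f=F] map_cong) auto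
  finally show ?thesis .
qed

section \<open>Canonical tensors\<close>

lemma tau_block_upd_notin:
  assumes "k \<notin> B" shows "tau_block I mu (Vs[k:=v]) B = tau_block I mu Vs B"
  unfolding tau_block_def using assms by (intro sum.cong refl arg_cong2[where f="(*)"] prod.cong) (metis nth_list_update_neq)

lemma tau_block_lin:
  assumes "k \<in> B" "finite B" "k < length Vs"
  shows "tau_block I mu (Vs[k := (\<lambda>i. a * v i + b * w i)]) B =
     a * tau_block I mu (Vs[k := v]) B + b * tau_block I mu (Vs[k := w]) B"
proof -
  have e: "(\<Prod>j\<in>B. ((Vs[k := u]) ! j) i) = u i * (\<Prod>j\<in>B-{k}. (Vs ! j) i)" for u :: "nat \<Rightarrow> real" and i
  proof -
    have "(\<Prod>j\<in>B. ((Vs[k := u]) ! j) i) = ((Vs[k := u]) ! k) i * (\<Prod>j\<in>B-{k}. ((Vs[k := u]) ! j) i)"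
      using assms by (simp add: prod.remove)
    also have "(\<Prod>j\<in>B-{k}. ((Vs[k := u]) ! j) i) = (\<Prod>j\<in>B-{k}. (Vs ! j) i)"
      by (intro prod.cong) auto
    finally show ?thesis using assms by simp
  qed
  show ?thesis unfolding tau_block_def e
    by (simp add: sum_distrib_left sum.distrib[symmetric] algebra_simps)
qed

lemma partitions_finite: "P \<in> partitions n \<Longrightarrow> finite P"
  unfolding partitions_def using finite_elements[of "{0..<n}" P] by simp

lemma partitions_block: "P \<in> partitions n \<Longrightarrow> B \<in> P \<Longrightarrow> B \<subseteq> {0..<n} \<and> B \<noteq> {} \<and> finite B"
proof -
  assume a: "P \<in> partitions n" "B \<in> P"
  have "B \<subseteq> {0..<n}" using a partition_onD1[of "{0..<n}" P] unfolding partitions_def by auto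
  moreover have "B \<noteq> {}" using a partition_onD3[of "{0..<n}" P] unfolding partitions_def by auto
  ultimately show ?thesis using finite_subset by auto
qed

lemma partitions_ex1: "P \<in> partitions n \<Longrightarrow> k < n \<Longrightarrow> \<exists>!B. B \<in> P \<and> k \<in> B"
proof -
  assume a: "P \<in> partitions n" "k < n"
  then have "k \<in> \<Union>P" using partition_onD1[of "{0..<n}" P] unfolding partitions_def by auto
  then obtain B where B: "B \<in> P" "k \<in> B" by auto
  have "disjoint P" using a partition_onD2 unfolding partitions_def by auto
  then have "B' \<in> P \<Longrightarrow> k \<in> B' \<Longrightarrow> B' = B" for B' using B unfolding disjoint_def by blast
  then show ?thesis using B by blast
qed

lemma tau_part_ml: "P \<in> partitions n \<Longrightarrow> ml T n (\<lambda>Vs. tau_part I mu Vs P)"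
  unfolding ml_def
proof (intro allI impI)
  fix Vs k v w a b assume h: "P \<in> partitions n" "length Vs = n \<and> set Vs \<subseteq> T \<and> k < n \<and> v \<in> T \<and> w \<in> T"
  obtain B0 where B0: "B0 \<in> P" "k \<in> B0" using partitions_ex1[OF h(1)] h(2) by blast
  have oth: "B \<in> P - {B0} \<Longrightarrow> k \<notin> B" for B using partitions_ex1[OF h(1), of k] h(2) B0 by auto
  have fin: "finite P" using partitions_finite[OF h(1)] .
  have split: "tau_part I mu W P = tau_block I mu W B0 * (\<Prod>B\<in>P-{B0}. tau_block I mu W B)" for W
    unfolding tau_part_def using fin B0 by (simp add: prod.remove)
  have rest: "(\<Prod>B\<in>P-{B0}. tau_block I mu (Vs[k:=u]) B) = (\<Prod>B\<in>P-{B0}. tau_block I mu Vs B)" for u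
    by (intro prod.cong refl tau_block_upd_notin oth)
  have lin: "tau_block I mu (Vs[k := (\<lambda>i. a * v i + b * w i)]) B0 =
     a * tau_block I mu (Vs[k := v]) B0 + b * tau_block I mu (Vs[k := w]) B0"
    using tau_block_lin[OF B0(2)] partitions_block[OF h(1) B0(1)] h(2) by auto
  show "tau_part I mu (Vs[k := (\<lambda>i. a * v i + b * w i)]) P =
        a * tau_part I mu (Vs[k := v]) P + b * tau_part I mu (Vs[k := w]) P"
    unfolding split rest lin by (simp add: distrib_right)
qed

section \<open>Kernels\<close>

lemma push_collapse:
  fixes K :: "nat \<Rightarrow> nat \<Rightarrow> real" and x :: "nat \<Rightarrow> real"
  assumes "finite I" "i' \<in> I'" "\<kappa> ` I' \<subseteq> I" "\<forall>i\<in>I. \<forall>i'\<in>I'. \<kappa> i' \<noteq> i \<longrightarrow> K i i' = 0"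
  shows "(\<Sum>i\<in>I. K i i' * x i) = K (\<kappa> i') i' * x (\<kappa> i')"
proof -
  have k: "\<kappa> i' \<in> I" using assms by auto
  have "(\<Sum>i\<in>I. K i i' * x i) = K (\<kappa> i') i' * x (\<kappa> i') + (\<Sum>i\<in>I-{\<kappa> i'}. K i i' * x i)"
    using k assms(1) by (simp add: sum.remove)
  also have "(\<Sum>i\<in>I-{\<kappa> i'}. K i i' * x i) = 0" by (intro sum.neutral ballI) (use assms(2,4) in auto)
  finally show ?thesis by simp
qed

lemma push_sum:
  assumes "finite I" "finite I'" "congruent_kernel I I' K"
  shows "(\<Sum>i'\<in>I'. push I I' K x i') = (\<Sum>i\<in>I. x i)"
proof -
  have "(\<Sum>i'\<in>I'. push I I' K x i') = (\<Sum>i'\<in>I'. \<Sum>i\<in>I. K i i' * x i)"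
    unfolding push_def by simp
  also have "\<dots> = (\<Sum>i\<in>I. x i * (\<Sum>i'\<in>I'. K i i'))"
    by (subst sum.swap) (simp add: sum_distrib_left algebra_simps)
  also have "\<dots> = (\<Sum>i\<in>I. x i)" using assms(3) unfolding congruent_kernel_def by simp
  finally show ?thesis .
qed

lemma push_Sm: "push I I' K x \<in> Sm I'" unfolding push_def Sm_def by auto

lemma push_pos_K:
  assumes "finite I" "congruent_kernel I I' K" "\<kappa> ` I' \<subseteq> I" "\<forall>i\<in>I. \<forall>i'\<in>I'. \<kappa> i' \<noteq> i \<longrightarrow> K i i' = 0"
    "mu \<in> Mplus I" "push I I' K mu \<in> Mplus I'" "i' \<in> I'"
  shows "K (\<kappa> i') i' > 0"
proof -
  have "push I I' K mu i' = K (\<kappa> i') i' * mu (\<kappa> i')"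
    unfolding push_def using assms push_collapse[OF assms(1) assms(7) assms(3,4)] by simp
  moreover have "push I I' K mu i' > 0" using assms(6,7) unfolding Mplus_def by auto
  moreover have "mu (\<kappa> i') > 0" using assms(3,5,7) unfolding Mplus_def by auto
  ultimately show ?thesis by (simp add: zero_less_mult_iff)
qed

lemma tau_block_push:
  assumes "finite I" "finite I'" "congruent_kernel I I' K" "mu \<in> Mplus I" "push I I' K mu \<in> Mplus I'"
    "B \<subseteq> {0..<length Vs}" "finite B"
  shows "tau_block I' (push I I' K mu) (map (push I I' K) Vs) B = tau_block I mu Vs B"
proof -
  obtain \<kappa> where ka: "\<kappa> ` I' \<subseteq> I" "\<forall>i\<in>I. \<forall>i'\<in>I'. \<kappa> i' \<noteq> i \<longrightarrow> K i i' = 0"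
    using assms(3) unfolding congruent_kernel_def by blast
  define g where "g i = mu i powi (1 - int (card B)) * (\<Prod>k\<in>B. (Vs ! k) i)" for i
  have pc: "push I I' K x i' = K (\<kappa> i') i' * x (\<kappa> i')" if "i' \<in> I'" for x i'
    unfolding push_def using that push_collapse[OF assms(1) that ka] by simp
  have tm: "push I I' K mu i' powi (1 - int (card B)) * (\<Prod>k\<in>B. (map (push I I' K) Vs ! k) i')
       = K (\<kappa> i') i' * g (\<kappa> i')" if i': "i' \<in> I'" for i'
  proof -
    define c where "c = K (\<kappa> i') i'"
    have Kp: "c > 0" unfolding c_def using push_pos_K[OF assms(1,3) ka assms(4,5) i'] .
    have "(\<Prod>k\<in>B. (map (push I I' K) Vs ! k) i') = (\<Prod>k\<in>B. c * (Vs ! k) (\<kappa> i'))"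
      unfolding c_def using assms(6) pc[OF i'] by (intro prod.cong) auto
    also have "\<dots> = c ^ card B * (\<Prod>k\<in>B. (Vs ! k) (\<kappa> i'))"
      by (simp add: prod.distrib)
    finally have p: "(\<Prod>k\<in>B. (map (push I I' K) Vs ! k) i') = c ^ card B * (\<Prod>k\<in>B. (Vs ! k) (\<kappa> i'))" .
    have kk: "c powi (1 - int (card B)) * c ^ card B = c"
    proof -
      have "c powi (1 - int (card B)) * c powi (int (card B)) = c powi ((1 - int (card B)) + int (card B))"
        using Kp by (intro power_int_add[symmetric]) auto
      moreover have "c powi (int (card B)) = c ^ card B" by (rule power_int_of_nat)
      moreover have "(1 - int (card B)) + int (card B) = 1" by simp
      ultimately show ?thesis by simp
    qed
    have pm: "push I I' K mu i' = c * mu (\<kappa> i')" unfolding c_def using pc[OF i'] .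
    have "push I I' K mu i' powi (1 - int (card B)) * (\<Prod>k\<in>B. (map (push I I' K) Vs ! k) i')
        = (c powi (1 - int (card B)) * c ^ card B) * (mu (\<kappa> i') powi (1 - int (card B)) * (\<Prod>k\<in>B. (Vs ! k) (\<kappa> i')))"
      unfolding p pm power_int_mult_distrib by (simp only: mult_ac)
    also have "\<dots> = c * g (\<kappa> i')" unfolding kk g_def ..
    finally show ?thesis unfolding c_def .
  qed
  have "tau_block I' (push I I' K mu) (map (push I I' K) Vs) B = (\<Sum>i'\<in>I'. K (\<kappa> i') i' * g (\<kappa> i'))"
    unfolding tau_block_def using tm by (intro sum.cong) auto
  also have "\<dots> = (\<Sum>i'\<in>I'. \<Sum>i\<in>I. K i i' * g i)"
    using push_collapse[OF assms(1) _ ka] by (intro sum.cong) auto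
  also have "\<dots> = (\<Sum>i\<in>I. g i * (\<Sum>i'\<in>I'. K i i'))"
    by (subst sum.swap) (simp add: sum_distrib_left mult.commute)
  also have "\<dots> = (\<Sum>i\<in>I. g i)" using assms(3) unfolding congruent_kernel_def by simp
  finally show ?thesis unfolding tau_block_def g_def .
qed

lemma tau_part_push:
  assumes "finite I" "finite I'" "congruent_kernel I I' K" "mu \<in> Mplus I" "push I I' K mu \<in> Mplus I'"
    "P \<in> partitions (length Vs)"
  shows "tau_part I' (push I I' K mu) (map (push I I' K) Vs) P = tau_part I mu Vs P"
  unfolding tau_part_def using tau_block_push[OF assms(1-5)] partitions_block[OF assms(6)]
  by (intro prod.cong) auto

lemma mnorm_push:
  assumes "finite I" "finite I'" "congruent_kernel I I' K" "mu \<in> Mplus I"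
  shows "mnorm I' (push I I' K mu) = mnorm I mu"
proof -
  have nn: "push I I' K mu i' \<ge> 0" if "i' \<in> I'" for i'
    using assms(3,4) that unfolding push_def congruent_kernel_def Mplus_def
    by (auto intro!: sum_nonneg)
  have "mnorm I' (push I I' K mu) = (\<Sum>i'\<in>I'. push I I' K mu i')"
    unfolding mnorm_def using nn by simp
  also have "\<dots> = (\<Sum>i\<in>I. mu i)" by (rule push_sum[OF assms(1-3)])
  also have "\<dots> = mnorm I mu" unfolding mnorm_def using assms(4) unfolding Mplus_def by (auto intro!: sum.cong)
  finally show ?thesis .
qed

section \<open>Triangular systems\<close>

lemma tri_exists:
  fixes S :: "'a set" and R :: "'a \<Rightarrow> 'a \<Rightarrow> bool" and r :: "'a \<Rightarrow> nat" and t :: "'a \<Rightarrow> real"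
  assumes fin: "finite S" and refl: "\<And>Q. Q \<in> S \<Longrightarrow> R Q Q"
    and rk: "\<And>P Q. P \<in> S \<Longrightarrow> Q \<in> S \<Longrightarrow> R P Q \<Longrightarrow> P \<noteq> Q \<Longrightarrow> r P < r Q"
  shows "\<exists>b. \<forall>Q\<in>S. (\<Sum>P\<in>{P\<in>S. R P Q}. b P) = t Q"
proof -
  have claim: "\<exists>b. \<forall>Q\<in>S. r Q < k \<longrightarrow> (\<Sum>P\<in>{P\<in>S. R P Q}. b P) = t Q" for k
  proof (induction k)
    case 0 then show ?case by simp
  next
    case (Suc k)
    then obtain b where b: "\<forall>Q\<in>S. r Q < k \<longrightarrow> (\<Sum>P\<in>{P\<in>S. R P Q}. b P) = t Q" by blast
    define b' where "b' P = (if r P = k then t P - (\<Sum>P'\<in>{P'\<in>S. R P' P} - {P}. b P') else b P)" for P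
    have "\<forall>Q\<in>S. r Q < Suc k \<longrightarrow> (\<Sum>P\<in>{P\<in>S. R P Q}. b' P) = t Q"
    proof (intro ballI impI)
      fix Q assume Q: "Q \<in> S" "r Q < Suc k"
      have fq: "finite {P\<in>S. R P Q}" using fin by simp
      have eqb: "b' P = b P" if "P \<in> {P\<in>S. R P Q} - {Q}" for P
      proof -
        have "r P < r Q" using rk[of P Q] that Q by auto
        then show ?thesis unfolding b'_def using Q by auto
      qed
      have split: "(\<Sum>P\<in>{P\<in>S. R P Q}. b' P) = b' Q + (\<Sum>P\<in>{P\<in>S. R P Q} - {Q}. b P)"
        using fq Q refl[OF Q(1)] eqb by (simp add: sum.remove)
      show "(\<Sum>P\<in>{P\<in>S. R P Q}. b' P) = t Q"
      proof (cases "r Q = k")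
        case True then show ?thesis unfolding split by (simp add: b'_def)
      next
        case False
        then have "r Q < k" using Q by simp
        have "(\<Sum>P\<in>{P\<in>S. R P Q}. b' P) = (\<Sum>P\<in>{P\<in>S. R P Q}. b P)"
          using fq Q refl[OF Q(1)] eqb False by (simp add: sum.remove b'_def)
        then show ?thesis using b \<open>r Q < k\<close> Q by simp
      qed
    qed
    then show ?case by blast
  qed
  obtain k where "\<forall>Q\<in>S. r Q < k"
    using finite_nat_bounded[OF finite_imageI[OF fin, of r]] by auto
  then show ?thesis using claim[of k] by auto
qed

lemma tri_unique:
  fixes S :: "'a set" and R :: "'a \<Rightarrow> 'a \<Rightarrow> bool" and r :: "'a \<Rightarrow> nat" and b :: "'a \<Rightarrow> real"
  assumes fin: "finite S" and refl: "\<And>Q. Q \<in> S \<Longrightarrow> R Q Q"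
    and rk: "\<And>P Q. P \<in> S \<Longrightarrow> Q \<in> S \<Longrightarrow> R P Q \<Longrightarrow> P \<noteq> Q \<Longrightarrow> r P < r Q"
    and z: "\<And>Q. Q \<in> S \<Longrightarrow> (\<Sum>P\<in>{P\<in>S. R P Q}. b P) = 0"
  shows "\<And>P. P \<in> S \<Longrightarrow> b P = 0"
proof -
  have "\<forall>Q\<in>S. r Q < k \<longrightarrow> b Q = 0" for k
  proof (induction k)
    case 0 then show ?case by simp
  next
    case (Suc k)
    show ?case
    proof (intro ballI impI)
      fix Q assume Q: "Q \<in> S" "r Q < Suc k"
      have fq: "finite {P\<in>S. R P Q}" using fin by simp
      have "(\<Sum>P\<in>{P\<in>S. R P Q}. b P) = b Q + (\<Sum>P\<in>{P\<in>S. R P Q} - {Q}. b P)"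
        using fq Q refl[OF Q(1)] by (simp add: sum.remove)
      also have "(\<Sum>P\<in>{P\<in>S. R P Q} - {Q}. b P) = 0"
      proof (intro sum.neutral ballI)
        fix P assume "P \<in> {P\<in>S. R P Q} - {Q}"
        then have "r P < k" "P \<in> S" using rk[of P Q] Q by auto
        then show "b P = 0" using Suc.IH by auto
      qed
      finally show "b Q = 0" using z[OF Q(1)] by simp
    qed
  qed
  then show "\<And>P. P \<in> S \<Longrightarrow> b P = 0" by blast
qed

section \<open>Partitions and index maps\<close>

definition Erel :: "nat set set \<Rightarrow> (nat \<times> nat) set" where
  "Erel P = {(x, y). \<exists>p\<in>P. x \<in> p \<and> y \<in> p}"

lemma partitions_finite_set: "finite (partitions n)"
  unfolding partitions_def using finitely_many_partition_on[of "{0..<n}"] by simp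

lemma refines_rank:
  assumes "P \<in> partitions n" "Q \<in> partitions n" "refines {0..<n} P Q" "P \<noteq> Q"
  shows "card (Erel P) < card (Erel Q)"
proof -
  have pP: "partition_on {0..<n} P" and pQ: "partition_on {0..<n} Q" using assms(1,2) unfolding partitions_def by auto
  have sub: "Erel P \<subseteq> Erel Q" using assms(3) unfolding refines_def Erel_def by blast
  have ne: "Erel P \<noteq> Erel Q"
  proof
    assume "Erel P = Erel Q"
    then have "{0..<n} // Erel P = {0..<n} // Erel Q" by simp
    then show False using partition_on_eq_quotient[OF pP] partition_on_eq_quotient[OF pQ] assms(4)
      unfolding Erel_def by simp
  qed
  have "Erel Q \<subseteq> {0..<n} \<times> {0..<n}" using partition_onD1[OF pQ] unfolding Erel_def by auto
  then have "finite (Erel Q)" using finite_subset by blast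
  then show ?thesis using sub ne by (simp add: psubset_card_mono)
qed

definition dl :: "nat \<Rightarrow> nat \<Rightarrow> real" where "dl i = (\<lambda>j. if j = i then 1 else 0)"
definition unif :: "nat set \<Rightarrow> real \<Rightarrow> nat \<Rightarrow> real" where "unif I c = (\<lambda>i. if i \<in> I then c else 0)"
definition dvs :: "nat \<Rightarrow> (nat \<Rightarrow> nat) \<Rightarrow> (nat \<Rightarrow> real) list" where "dvs n f = map (\<lambda>k. dl (f k)) [0..<n]"
definition kerp :: "nat \<Rightarrow> (nat \<Rightarrow> nat) \<Rightarrow> nat set set" where
  "kerp n f = (\<lambda>k. {j\<in>{0..<n}. f j = f k}) ` {0..<n}"

lemma dl_Sm: "i \<in> I \<Longrightarrow> dl i \<in> Sm I" unfolding dl_def Sm_def by auto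
lemma unif_Mplus: "c > 0 \<Longrightarrow> unif I c \<in> Mplus I" unfolding unif_def Mplus_def Sm_def by auto
lemma dvs_Sm: "(\<And>k. k < n \<Longrightarrow> f k \<in> I) \<Longrightarrow> set (dvs n f) \<subseteq> Sm I"
  unfolding dvs_def using dl_Sm by auto
lemma length_dvs[simp]: "length (dvs n f) = n" unfolding dvs_def by simp
lemma nth_dvs[simp]: "k < n \<Longrightarrow> dvs n f ! k = dl (f k)" unfolding dvs_def by simp

lemma Sm_delta: "finite I \<Longrightarrow> V \<in> Sm I \<Longrightarrow> V = (\<lambda>i. \<Sum>j\<in>I. V j * dl j i)"
  unfolding dl_def Sm_def by (auto simp: if_distrib cong: if_cong)

lemma expand_Sm:
  assumes "ml (Sm I) n F" "finite I" "length Vs = n" "set Vs \<subseteq> Sm I"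
  shows "F Vs = (\<Sum>g\<in>PiE {0..<n} (\<lambda>_. I). (\<Prod>k<n. (Vs ! k) (g k)) * F (dvs n g))"
proof -
  have "F Vs = (\<Sum>g\<in>PiE {0..<n} (\<lambda>_. I). (\<Prod>k<n. (Vs ! k) (g k)) * F (map (\<lambda>k. dl (g k)) [0..<n]))"
  proof (rule ml_expand[OF assms(1) lin_Sm assms(3,4,2)])
    show "\<And>j. j \<in> I \<Longrightarrow> dl j \<in> Sm I" by (rule dl_Sm)
    show "\<And>k. k < n \<Longrightarrow> Vs ! k = (\<lambda>i. \<Sum>j\<in>I. (Vs ! k) j * dl j i)"
      using Sm_delta[OF assms(2)] assms(3,4) by (metis nth_mem subsetD)
  qed
  then show ?thesis unfolding dvs_def .
qed

lemma kerp_partition: "kerp n f \<in> partitions n"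
  unfolding partitions_def
proof (simp, rule partition_onI)
  show "\<Union>(kerp n f) = {0..<n}" unfolding kerp_def by auto
  show "{} \<notin> kerp n f" unfolding kerp_def by auto
next
  fix p q assume "p \<in> kerp n f" "q \<in> kerp n f" "p \<noteq> q"
  then show "disjnt p q" unfolding kerp_def disjnt_def by auto
qed

definition cst :: "(nat \<Rightarrow> nat) \<Rightarrow> nat set \<Rightarrow> bool" where
  "cst f B \<longleftrightarrow> (\<forall>k\<in>B. \<forall>j\<in>B. f k = f j)"

lemma prod_ind: "finite A \<Longrightarrow> (\<Prod>x\<in>A. (if Q x then 1 else 0::real)) = (if \<forall>x\<in>A. Q x then 1 else 0)"
  by (induction rule: finite_induct) auto

lemma refines_kerp:
  assumes "P \<in> partitions n"
  shows "refines {0..<n} P (kerp n f) \<longleftrightarrow> (\<forall>B\<in>P. cst f B)"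
proof
  assume "refines {0..<n} P (kerp n f)"
  then have h: "\<forall>X\<in>P. \<exists>Y\<in>kerp n f. X \<subseteq> Y" unfolding refines_def by blast
  show "\<forall>B\<in>P. cst f B"
  proof
    fix B assume "B \<in> P"
    then obtain Y where Y: "Y \<in> kerp n f" "B \<subseteq> Y" using h by blast
    then obtain l where "Y = {j\<in>{0..<n}. f j = f l}" unfolding kerp_def by blast
    then have "\<forall>k\<in>B. f k = f l" using Y(2) by blast
    then show "cst f B" unfolding cst_def by simp
  qed
next
  assume h: "\<forall>B\<in>P. cst f B"
  have "\<forall>X\<in>P. \<exists>Y\<in>kerp n f. X \<subseteq> Y"
  proof
    fix X assume X: "X \<in> P"
    then obtain k where k: "k \<in> X" using partitions_block[OF assms] by blast
    have "X \<subseteq> {0..<n}" using partitions_block[OF assms X] by blast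
    then have "X \<subseteq> {j\<in>{0..<n}. f j = f k}" using h X k unfolding cst_def by blast
    moreover have "k \<in> {0..<n}" using \<open>X \<subseteq> {0..<n}\<close> k by auto
    ultimately show "\<exists>Y\<in>kerp n f. X \<subseteq> Y" unfolding kerp_def by blast
  qed
  then show "refines {0..<n} P (kerp n f)"
    using assms kerp_partition[of n f] unfolding refines_def partitions_def by auto
qed

lemma kerp_eq_imp:
  assumes "kerp n f = kerp n g" "k < n" "j < n" "f k = f j"
  shows "g k = g j"
proof -
  have "{x\<in>{0..<n}. f x = f k} \<in> kerp n f" unfolding kerp_def using assms(2) by auto
  then have "{x\<in>{0..<n}. f x = f k} \<in> kerp n g" using assms(1) by simp
  then obtain l where l: "l < n" "{x\<in>{0..<n}. f x = f k} = {x\<in>{0..<n}. g x = g l}" unfolding kerp_def by auto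
  have "k \<in> {x\<in>{0..<n}. g x = g l}" "j \<in> {x\<in>{0..<n}. g x = g l}" using l assms by auto
  then show ?thesis by auto
qed

definition wgt :: "real \<Rightarrow> nat set set \<Rightarrow> real" where
  "wgt c P = (\<Prod>B\<in>P. c powi (1 - int (card B)))"

lemma wgt_nz: "c > 0 \<Longrightarrow> wgt c P \<noteq> 0"
  unfolding wgt_def by (cases "finite P") (auto simp: prod_zero_iff)

lemma tau_dvs:
  assumes "finite I" "P \<in> partitions n" "\<And>k. k < n \<Longrightarrow> f k \<in> I"
  shows "tau_part I (unif I c) (dvs n f) P = wgt c P * (if \<forall>B\<in>P. cst f B then 1 else 0)"
proof -
  have blk: "tau_block I (unif I c) (dvs n f) B = c powi (1 - int (card B)) * (if cst f B then 1 else 0)"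
    if B: "B \<in> P" for B
  proof -
    have Bs: "B \<subseteq> {0..<n}" "B \<noteq> {}" "finite B" using partitions_block[OF assms(2) B] by auto
    then obtain k0 where k0: "k0 \<in> B" by blast
    have pr: "(\<Prod>k\<in>B. (dvs n f ! k) i) = (if i = f k0 \<and> (cst f B) then 1 else 0)" for i
    proof -
      have "(\<Prod>k\<in>B. (dvs n f ! k) i) = (\<Prod>k\<in>B. if f k = i then 1 else 0)"
        using Bs by (intro prod.cong) (auto simp: dl_def)
      also have "\<dots> = (if \<forall>k\<in>B. f k = i then 1 else 0)"
        using Bs(3) by (rule prod_ind)
      also have "(\<forall>k\<in>B. f k = i) \<longleftrightarrow> (i = f k0 \<and> (cst f B))" using k0 unfolding cst_def by metis
      finally show ?thesis .
    qed
    have fk: "f k0 \<in> I" using assms(3) k0 Bs by auto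
    have "tau_block I (unif I c) (dvs n f) B = (\<Sum>i\<in>I. if i = f k0 then c powi (1 - int (card B)) * (if cst f B then 1 else 0) else 0)"
      unfolding tau_block_def pr by (intro sum.cong refl) (auto simp: unif_def)
    also have "\<dots> = c powi (1 - int (card B)) * (if cst f B then 1 else 0)"
      using fk assms(1) by (simp add: sum.delta')
    finally show ?thesis .
  qed
  have "tau_part I (unif I c) (dvs n f) P = (\<Prod>B\<in>P. c powi (1 - int (card B)) * (if cst f B then 1 else 0))"
    unfolding tau_part_def using blk by (intro prod.cong) auto
  also have "\<dots> = wgt c P * (\<Prod>B\<in>P. (if cst f B then 1 else 0))"
    unfolding wgt_def by (simp add: prod.distrib)
  also have "(\<Prod>B\<in>P. (if cst f B then 1 else (0::real))) = (if \<forall>B\<in>P. cst f B then 1 else 0)"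
    using partitions_finite[OF assms(2)] by (rule prod_ind)
  finally show ?thesis .
qed

section \<open>Bijection kernels\<close>

definition bk :: "(nat \<Rightarrow> nat) \<Rightarrow> nat \<Rightarrow> nat \<Rightarrow> real" where
  "bk \<sigma> i i' = (if \<sigma> i = i' then 1 else 0)"

lemma bij_kernel:
  assumes "bij_betw \<sigma> J J'" "finite J" "finite J'"
  shows "congruent_kernel J J' (bk \<sigma>)"
    and "\<And>x i'. i' \<in> J' \<Longrightarrow> push J J' (bk \<sigma>) x i' = x (inv_into J \<sigma> i')"
proof -
  let ?k = "inv_into J \<sigma>"
  have inj: "inj_on \<sigma> J" and im: "\<sigma> ` J = J'" using assms(1) unfolding bij_betw_def by auto
  have kJ: "?k ` J' \<subseteq> J" using im by (auto intro: inv_into_into)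
  have z: "\<forall>i\<in>J. \<forall>i'\<in>J'. ?k i' \<noteq> i \<longrightarrow> bk \<sigma> i i' = 0"
    using inj unfolding bk_def by auto
  have s1: "(\<Sum>i'\<in>J'. bk \<sigma> i i') = 1" if "i \<in> J" for i
  proof -
    have "\<sigma> i \<in> J'" using that im by auto
    then show ?thesis unfolding bk_def using assms(3) by (simp add: sum.delta)
  qed
  have nn: "\<forall>i\<in>J. \<forall>i'\<in>J'. 0 \<le> bk \<sigma> i i'" by (simp add: bk_def)
  show "congruent_kernel J J' (bk \<sigma>)"
    unfolding congruent_kernel_def using kJ z s1 nn by blast
  fix x i' assume i': "i' \<in> J'"
  have "push J J' (bk \<sigma>) x i' = bk \<sigma> (?k i') i' * x (?k i')"
    unfolding push_def using i' push_collapse[OF assms(2) i' kJ z] by simp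
  also have "bk \<sigma> (?k i') i' = 1" unfolding bk_def using i' im by (simp add: f_inv_into_f)
  finally show "push J J' (bk \<sigma>) x i' = x (inv_into J \<sigma> i')" by simp
qed

lemma bij_push_unif:
  assumes "bij_betw \<sigma> J J'" "finite J" "finite J'"
  shows "push J J' (bk \<sigma>) (unif J c) = unif J' c"
proof
  fix i'
  show "push J J' (bk \<sigma>) (unif J c) i' = unif J' c i'"
  proof (cases "i' \<in> J'")
    case True
    have "inv_into J \<sigma> i' \<in> J" using assms(1) True
      by (metis bij_betw_def inv_into_into)
    then show ?thesis using bij_kernel(2)[OF assms True] True by (simp add: unif_def)
  qed (simp add: push_def unif_def)
qed

lemma bij_push_dl:
  assumes "bij_betw \<sigma> J J'" "finite J" "finite J'" "i \<in> J"
  shows "push J J' (bk \<sigma>) (dl i) = dl (\<sigma> i)"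
proof
  fix i'
  have sJ: "\<sigma> i \<in> J'" using assms by (auto simp: bij_betw_def)
  show "push J J' (bk \<sigma>) (dl i) i' = dl (\<sigma> i) i'"
  proof (cases "i' \<in> J'")
    case True
    have inj: "inj_on \<sigma> J" and im: "\<sigma> ` J = J'" using assms(1) unfolding bij_betw_def by auto
    have "(inv_into J \<sigma> i' = i) \<longleftrightarrow> (i' = \<sigma> i)"
      using True inj im assms(4) by (metis f_inv_into_f inv_into_f_f)
    then show ?thesis using bij_kernel(2)[OF assms(1-3) True] by (simp add: dl_def)
  next
    case False
    then show ?thesis using sJ by (auto simp: push_def dl_def)
  qed
qed

lemma bij_push_Mplus:
  assumes "bij_betw \<sigma> J J'" "finite J" "finite J'"
  shows "push J J' (bk \<sigma>) ` Mplus J \<subseteq> Mplus J'"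
proof
  fix y assume "y \<in> push J J' (bk \<sigma>) ` Mplus J"
  then obtain x where x: "x \<in> Mplus J" "y = push J J' (bk \<sigma>) x" by blast
  have "inv_into J \<sigma> i' \<in> J" if "i' \<in> J'" for i' using assms(1) that by (metis bij_betw_def inv_into_into)
  then show "y \<in> Mplus J'" using x bij_kernel(2)[OF assms] push_Sm unfolding Mplus_def by auto
qed

lemma exists_perm:
  assumes "finite I" "A \<subseteq> I" "inj_on h A" "h ` A \<subseteq> I"
  shows "\<exists>\<sigma>. bij_betw \<sigma> I I \<and> (\<forall>x\<in>A. \<sigma> x = h x)"
proof -
  have fA: "finite A" using assms(1,2) finite_subset by blast
  have "card (I - A) = card (I - h ` A)"
    using assms fA by (simp add: card_Diff_subset card_image)
  then obtain \<tau> where \<tau>: "bij_betw \<tau> (I - A) (I - h ` A)"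
    using finite_same_card_bij assms(1) by (meson finite_Diff)
  define \<sigma> where "\<sigma> x = (if x \<in> A then h x else \<tau> x)" for x
  have b1: "bij_betw \<sigma> A (h ` A)"
    using assms(3) by (simp add: \<sigma>_def bij_betw_def inj_on_def image_def)
  have b2: "bij_betw \<sigma> (I - A) (I - h ` A)"
    using \<tau> by (rule bij_betw_cong[THEN iffD1, rotated]) (simp add: \<sigma>_def)
  have "bij_betw \<sigma> (A \<union> (I - A)) (h ` A \<union> (I - h ` A))"
    by (rule bij_betw_combine[OF b1 b2]) auto
  moreover have "A \<union> (I - A) = I" "h ` A \<union> (I - h ` A) = I" using assms by auto
  ultimately show ?thesis by (auto simp: \<sigma>_def)
qed

lemma perm_inv:
  assumes cong: "congruent_family_M n Th" and I: "finite I" "I \<noteq> {}" and c: "c > 0"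
    and fg: "\<And>k. k < n \<Longrightarrow> f k \<in> I \<and> g k \<in> I"
    and eq: "\<And>k j. k < n \<Longrightarrow> j < n \<Longrightarrow> f k = f j \<longleftrightarrow> g k = g j"
  shows "Th I (unif I c) (dvs n f) = Th I (unif I c) (dvs n g)"
proof -
  define h where "h x = g (SOME k. k < n \<and> f k = x)" for x
  have hf: "h (f k) = g k" if "k < n" for k
  proof -
    have ex: "\<exists>k'. k' < n \<and> f k' = f k" using that by blast
    have "(SOME k'. k' < n \<and> f k' = f k) < n \<and> f (SOME k'. k' < n \<and> f k' = f k) = f k"
      by (rule someI_ex[OF ex])
    then show ?thesis unfolding h_def using eq that by blast
  qed
  have inj: "inj_on h (f ` {0..<n})"
    by (rule inj_onI) (use hf eq in auto)
  have sub: "f ` {0..<n} \<subseteq> I" "h ` f ` {0..<n} \<subseteq> I" using fg hf by auto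
  obtain \<sigma> where \<sigma>: "bij_betw \<sigma> I I" "\<forall>x\<in>f ` {0..<n}. \<sigma> x = h x"
    using exists_perm[OF I(1) sub(1) inj sub(2)] by blast
  have kc: "congruent_kernel I I (bk \<sigma>)" by (rule bij_kernel(1)[OF \<sigma>(1) I(1) I(1)])
  have "Th I (push I I (bk \<sigma>) (unif I c)) (map (push I I (bk \<sigma>)) (dvs n f)) = Th I (unif I c) (dvs n f)"
    using cong kc I bij_push_Mplus[OF \<sigma>(1) I(1) I(1)] unif_Mplus[OF c] dvs_Sm[of n f I] fg
    unfolding congruent_family_M_def by (metis length_dvs)
  moreover have "push I I (bk \<sigma>) (unif I c) = unif I c" by (rule bij_push_unif[OF \<sigma>(1) I(1) I(1)])
  moreover have "map (push I I (bk \<sigma>)) (dvs n f) = dvs n g"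
  proof (rule nth_equalityI)
    show "length (map (push I I (bk \<sigma>)) (dvs n f)) = length (dvs n g)" by simp
    fix k assume "k < length (map (push I I (bk \<sigma>)) (dvs n f))"
    then have k: "k < n" by simp
    have "push I I (bk \<sigma>) (dl (f k)) = dl (\<sigma> (f k))" using bij_push_dl[OF \<sigma>(1) I(1) I(1)] fg[OF k] by blast
    also have "\<sigma> (f k) = g k" using \<sigma>(2) hf k by auto
    finally show "map (push I I (bk \<sigma>)) (dvs n f) ! k = dvs n g ! k" using k by simp
  qed
  ultimately show ?thesis by simp
qed

section \<open>Uniform measures\<close>

lemma unif_decomp:
  assumes cong: "congruent_family_M n Th" and fld: "tensor_field (Mplus I) (Sm I) n (Th I)"
    and I: "finite I" "I \<noteq> {}" and c: "c > 0"
  shows "\<exists>a. \<forall>Vs. length Vs = n \<and> set Vs \<subseteq> Sm I \<longrightarrow>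
            Th I (unif I c) Vs = (\<Sum>P\<in>partitions n. a P * tau_part I (unif I c) Vs P)"
proof -
  let ?S = "partitions n" and ?u = "unif I c"
  define \<theta> where "\<theta> f = Th I ?u (dvs n f)" for f
  define t where "t Q = \<theta> (SOME f. (\<forall>k<n. f k \<in> I) \<and> kerp n f = Q)" for Q
  have rfl: "\<And>Q. Q \<in> ?S \<Longrightarrow> refines {0..<n} Q Q" unfolding partitions_def by (simp add: refines_refl)
  obtain b where b: "\<forall>Q\<in>?S. (\<Sum>P\<in>{P\<in>?S. refines {0..<n} P Q}. b P) = t Q"
    using tri_exists[of ?S "refines {0..<n}" "\<lambda>P. card (Erel P)" t] partitions_finite_set rfl refines_rank by blast
  define a where "a P = b P / wgt c P" for P
  have claim: "\<theta> f = (\<Sum>P\<in>?S. a P * tau_part I ?u (dvs n f) P)" if f: "\<forall>k<n. f k \<in> I" for f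
  proof -
    let ?Q = "kerp n f"
    define g where "g = (SOME f'. (\<forall>k<n. f' k \<in> I) \<and> kerp n f' = ?Q)"
    have g: "(\<forall>k<n. g k \<in> I) \<and> kerp n g = ?Q" unfolding g_def by (rule someI[of _ f]) (use f in simp)
    have "\<theta> f = \<theta> g" unfolding \<theta>_def
      by (rule perm_inv[OF cong I c]) (use f g kerp_eq_imp in metis)+
    also have "\<theta> g = t ?Q" unfolding t_def g_def ..
    also have "\<dots> = (\<Sum>P\<in>{P\<in>?S. refines {0..<n} P ?Q}. b P)" using b kerp_partition by metis
    also have "\<dots> = (\<Sum>P\<in>?S. if refines {0..<n} P ?Q then b P else 0)"
      by (rule sum.inter_filter[OF partitions_finite_set])
    also have "\<dots> = (\<Sum>P\<in>?S. a P * tau_part I ?u (dvs n f) P)"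
    proof (rule sum.cong[OF refl])
      fix P assume P: "P \<in> ?S"
      have fi: "\<And>k. k < n \<Longrightarrow> f k \<in> I" using f by auto
      show "(if refines {0..<n} P ?Q then b P else 0) = a P * tau_part I ?u (dvs n f) P"
        using tau_dvs[OF I(1) P fi, where c=c] refines_kerp[OF P, of f] wgt_nz[OF c, of P] unfolding a_def by simp
    qed
    finally show ?thesis .
  qed
  show ?thesis
  proof (intro exI allI impI)
    fix Vs assume Vs: "length Vs = n \<and> set Vs \<subseteq> Sm I"
    have mlT: "ml (Sm I) n (Th I ?u)" using tensor_field_ml[OF fld unif_Mplus[OF c]] .
    have "Th I ?u Vs = (\<Sum>g\<in>PiE {0..<n} (\<lambda>_. I). (\<Prod>k<n. (Vs ! k) (g k)) * \<theta> g)"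
      unfolding \<theta>_def using expand_Sm[OF mlT I(1)] Vs by blast
    also have "\<dots> = (\<Sum>g\<in>PiE {0..<n} (\<lambda>_. I). \<Sum>P\<in>?S. a P * ((\<Prod>k<n. (Vs ! k) (g k)) * tau_part I ?u (dvs n g) P))"
      by (intro sum.cong refl) (auto simp: claim PiE_iff sum_distrib_left mult_ac)
    also have "\<dots> = (\<Sum>P\<in>?S. a P * (\<Sum>g\<in>PiE {0..<n} (\<lambda>_. I). (\<Prod>k<n. (Vs ! k) (g k)) * tau_part I ?u (dvs n g) P))"
      by (subst sum.swap) (simp add: sum_distrib_left)
    also have "\<dots> = (\<Sum>P\<in>?S. a P * tau_part I ?u Vs P)"
    proof (intro sum.cong refl arg_cong2[where f="(*)"])
      fix P assume P: "P \<in> ?S"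
      show "(\<Sum>g\<in>PiE {0..<n} (\<lambda>_. I). (\<Prod>k<n. (Vs ! k) (g k)) * tau_part I ?u (dvs n g) P) = tau_part I ?u Vs P"
        using expand_Sm[OF tau_part_ml[OF P] I(1), of Vs] Vs by simp
    qed
    finally show "Th I ?u Vs = (\<Sum>P\<in>?S. a P * tau_part I ?u Vs P)" .
  qed
qed

lemma partitions_card: "Q \<in> partitions n \<Longrightarrow> card Q \<le> n"
proof -
  assume Q: "Q \<in> partitions n"
  have "n = card {0..<n}" by simp
  also have "\<dots> = (\<Sum>p\<in>Q. card p)"
    using Q partitions_block[OF Q] unfolding partitions_def by (intro product_partition) auto
  also have "\<dots> \<ge> (\<Sum>p\<in>Q. 1)"
    by (intro sum_mono) (use partitions_block[OF Q] in \<open>auto simp: Suc_le_eq card_gt_0_iff\<close>)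
  finally show ?thesis by simp
qed

lemma kerp_surj:
  assumes Q: "Q \<in> partitions n" and I: "finite I" "card I \<ge> n"
  shows "\<exists>f. (\<forall>k<n. f k \<in> I) \<and> kerp n f = Q"
proof -
  obtain \<iota> where \<iota>: "\<iota> ` Q \<subseteq> I" "inj_on \<iota> Q"
    using card_le_inj[OF partitions_finite[OF Q] I(1)] partitions_card[OF Q] I(2) by fastforce
  define blk where "blk k = (THE B. B \<in> Q \<and> k \<in> B)" for k
  have blk: "blk k \<in> Q \<and> k \<in> blk k" if "k < n" for k
    unfolding blk_def using theI'[OF partitions_ex1[OF Q that]] .
  have blk_eq: "blk k = B" if "B \<in> Q" "k \<in> B" for k B
  proof -
    have kn: "k < n" using partitions_block[OF Q that(1)] that(2) by auto
    show ?thesis unfolding blk_def by (rule the1_equality[OF partitions_ex1[OF Q kn]]) (use that in simp)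
  qed
  define f where "f k = \<iota> (blk k)" for k
  have "kerp n f = Q"
  proof -
    have e: "{j\<in>{0..<n}. f j = f k} = blk k" if k: "k < n" for k
    proof
      show "{j\<in>{0..<n}. f j = f k} \<subseteq> blk k"
      proof
        fix j assume "j \<in> {j\<in>{0..<n}. f j = f k}"
        then have j: "j < n" "\<iota> (blk j) = \<iota> (blk k)" unfolding f_def by auto
        then have "blk j = blk k" using \<iota>(2) blk[OF k] blk[OF j(1)] by (meson inj_onD)
        then show "j \<in> blk k" using blk[OF j(1)] by simp
      qed
      show "blk k \<subseteq> {j\<in>{0..<n}. f j = f k}"
      proof
        fix j assume j: "j \<in> blk k"
        then have "j < n" using partitions_block[OF Q] blk[OF k] by fastforce
        moreover have "blk j = blk k" using blk_eq blk[OF k] j by blast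
        ultimately show "j \<in> {j\<in>{0..<n}. f j = f k}" unfolding f_def by simp
      qed
    qed
    have "kerp n f = blk ` {0..<n}" unfolding kerp_def using e by (intro image_cong) auto
    also have "\<dots> = Q"
    proof
      show "blk ` {0..<n} \<subseteq> Q" using blk by auto
      show "Q \<subseteq> blk ` {0..<n}"
      proof
        fix B assume B: "B \<in> Q"
        then obtain k where k: "k \<in> B" using partitions_block[OF Q] by blast
        then have "k < n" using partitions_block[OF Q B] by auto
        then show "B \<in> blk ` {0..<n}" using blk_eq[OF B k] by force
      qed
    qed
    finally show ?thesis .
  qed
  moreover have "\<forall>k<n. f k \<in> I" using blk \<iota>(1) unfolding f_def by blast
  ultimately show ?thesis by blast
qed

lemma unif_unique:
  assumes I: "finite I" "card I \<ge> n" and c: "c > 0"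
    and eq: "\<And>Vs. length Vs = n \<Longrightarrow> set Vs \<subseteq> Sm I \<Longrightarrow>
       (\<Sum>P\<in>partitions n. a P * tau_part I (unif I c) Vs P) = (\<Sum>P\<in>partitions n. b P * tau_part I (unif I c) Vs P)"
  shows "\<And>P. P \<in> partitions n \<Longrightarrow> a P = b P"
proof -
  let ?S = "partitions n"
  define d where "d P = (a P - b P) * wgt c P" for P
  have rfl: "\<And>Q. Q \<in> ?S \<Longrightarrow> refines {0..<n} Q Q" unfolding partitions_def by (simp add: refines_refl)
  have z: "(\<Sum>P\<in>{P\<in>?S. refines {0..<n} P Q}. d P) = 0" if Q: "Q \<in> ?S" for Q
  proof -
    obtain f where f: "\<forall>k<n. f k \<in> I" "kerp n f = Q" using kerp_surj[OF Q I] by blast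
    have "(\<Sum>P\<in>?S. a P * tau_part I (unif I c) (dvs n f) P) = (\<Sum>P\<in>?S. b P * tau_part I (unif I c) (dvs n f) P)"
      using eq[of "dvs n f"] dvs_Sm[of n f I] f by auto
    then have "(\<Sum>P\<in>?S. (a P - b P) * tau_part I (unif I c) (dvs n f) P) = 0"
      by (simp add: left_diff_distrib sum_subtractf)
    moreover have "(\<Sum>P\<in>?S. (a P - b P) * tau_part I (unif I c) (dvs n f) P) = (\<Sum>P\<in>?S. if refines {0..<n} P Q then d P else 0)"
    proof (rule sum.cong[OF refl])
      fix P assume P: "P \<in> ?S"
      have fi: "\<And>k. k < n \<Longrightarrow> f k \<in> I" using f by auto
      show "(a P - b P) * tau_part I (unif I c) (dvs n f) P = (if refines {0..<n} P Q then d P else 0)"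
        using tau_dvs[OF I(1) P fi, where c=c] refines_kerp[OF P, of f] f unfolding d_def by auto
    qed
    ultimately show ?thesis by (simp add: sum.inter_filter[OF partitions_finite_set])
  qed
  fix P assume P: "P \<in> ?S"
  have "d P = 0" using tri_unique[of ?S "refines {0..<n}" "\<lambda>P. card (Erel P)" d] partitions_finite_set rfl refines_rank z P by blast
  then show "a P = b P" unfolding d_def using wgt_nz[OF c, of P] by simp
qed


section \<open>Splitting kernels\<close>

definition sW :: "nat set \<Rightarrow> (nat \<Rightarrow> nat) \<Rightarrow> nat set" where
  "sW I m = prod_encode ` (SIGMA i:I. {..<m i})"

definition sK :: "(nat \<Rightarrow> nat) \<Rightarrow> nat \<Rightarrow> nat \<Rightarrow> real" where
  "sK m i w = (if fst (prod_decode w) = i then 1 / real (m i) else 0)"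

lemma sW_kappa: "w \<in> sW I m \<Longrightarrow> fst (prod_decode w) \<in> I"
  unfolding sW_def by auto

lemma sW_finite: "finite I \<Longrightarrow> finite (sW I m)"
  unfolding sW_def by auto

lemma sW_card: "finite I \<Longrightarrow> card (sW I m) = (\<Sum>i\<in>I. m i)"
  unfolding sW_def by (simp add: card_image inj_prod_encode card_SigmaI)

lemma sW_nonempty: "I \<noteq> {} \<Longrightarrow> \<forall>i\<in>I. m i \<ge> 1 \<Longrightarrow> sW I m \<noteq> {}"
proof -
  assume a: "I \<noteq> {}" "\<forall>i\<in>I. m i \<ge> 1"
  then obtain i where "i \<in> I" by blast
  then have "prod_encode (i, 0) \<in> sW I m" using a unfolding sW_def by force
  then show ?thesis by blast
qed

lemma sK_row: "finite I \<Longrightarrow> i \<in> I \<Longrightarrow> m i \<ge> 1 \<Longrightarrow> (\<Sum>w\<in>sW I m. sK m i w) = 1"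
proof -
  assume a: "finite I" "i \<in> I" "m i \<ge> 1"
  have "(\<Sum>w\<in>sW I m. sK m i w) = (\<Sum>p\<in>(SIGMA i:I. {..<m i}). sK m i (prod_encode p))"
    unfolding sW_def by (rule sum.reindex[OF inj_prod_encode, unfolded comp_def])
  also have "\<dots> = (\<Sum>i'\<in>I. \<Sum>j\<in>{..<m i'}. if i' = i then 1 / real (m i) else 0)"
    unfolding sK_def using a(1) by (subst sum.Sigma) (auto simp: split_beta)
  also have "\<dots> = (\<Sum>j\<in>{..<m i}. 1 / real (m i))"
    using a(1,2) by (simp add: sum.delta' if_distrib cong: if_cong)
  also have "\<dots> = 1" using a(3) by simp
  finally show ?thesis .
qed

lemma split_kernel:
  assumes "finite I" "\<forall>i\<in>I. m i \<ge> 1"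
  shows "congruent_kernel I (sW I m) (sK m)"
proof -
  have "\<forall>i\<in>I. \<forall>w\<in>sW I m. 0 \<le> sK m i w" by (simp add: sK_def)
  moreover have "\<forall>i\<in>I. (\<Sum>w\<in>sW I m. sK m i w) = 1" using sK_row assms by blast
  moreover have "(\<lambda>w. fst (prod_decode w)) ` sW I m \<subseteq> I" using sW_kappa by blast
  moreover have "\<forall>i\<in>I. \<forall>w\<in>sW I m. fst (prod_decode w) \<noteq> i \<longrightarrow> sK m i w = 0" by (simp add: sK_def)
  ultimately show ?thesis unfolding congruent_kernel_def by blast
qed

lemma split_push:
  assumes "finite I" "w \<in> sW I m"
  shows "push I (sW I m) (sK m) x w = x (fst (prod_decode w)) / real (m (fst (prod_decode w)))"
proof -
  have z: "\<forall>i\<in>I. \<forall>w\<in>sW I m. fst (prod_decode w) \<noteq> i \<longrightarrow> sK m i w = 0" by (simp add: sK_def)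
  have "push I (sW I m) (sK m) x w = sK m (fst (prod_decode w)) w * x (fst (prod_decode w))"
    unfolding push_def using assms push_collapse[OF assms(1) assms(2) _ z] sW_kappa by auto
  then show ?thesis by (simp add: sK_def)
qed

lemma split_Mplus:
  assumes "finite I" "\<forall>i\<in>I. m i \<ge> 1"
  shows "push I (sW I m) (sK m) ` Mplus I \<subseteq> Mplus (sW I m)"
proof
  fix y assume "y \<in> push I (sW I m) (sK m) ` Mplus I"
  then obtain x where x: "x \<in> Mplus I" "y = push I (sW I m) (sK m) x" by blast
  have "y w > 0" if "w \<in> sW I m" for w
  proof -
    have "fst (prod_decode w) \<in> I" using sW_kappa that by blast
    then show ?thesis using x split_push[OF assms(1) that] assms(2) unfolding Mplus_def by auto
  qed
  then show "y \<in> Mplus (sW I m)" using x push_Sm unfolding Mplus_def by auto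
qed

lemma cong_apply:
  assumes "congruent_family_M n Th" "finite I" "I \<noteq> {}" "finite I'" "I' \<noteq> {}" "congruent_kernel I I' K"
    "push I I' K ` Mplus I \<subseteq> Mplus I'" "mu \<in> Mplus I" "length Vs = n" "set Vs \<subseteq> Sm I"
  shows "Th I' (push I I' K mu) (map (push I I' K) Vs) = Th I mu Vs"
  using assms unfolding congruent_family_M_def by blast

lemma tau_sum_push:
  assumes "finite I" "finite I'" "congruent_kernel I I' K" "mu \<in> Mplus I" "push I I' K ` Mplus I \<subseteq> Mplus I'"
    "length Vs = n"
  shows "(\<Sum>P\<in>partitions n. b P * tau_part I' (push I I' K mu) (map (push I I' K) Vs) P) =
         (\<Sum>P\<in>partitions n. b P * tau_part I mu Vs P)"
  using tau_part_push[OF assms(1-4)] assms(4,5,6) by (intro sum.cong refl) auto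

lemma map_push_Sm: "set (map (push I I' K) Vs) \<subseteq> Sm I'" using push_Sm by auto


definition Acoef :: "nat \<Rightarrow> (nat set \<Rightarrow> (nat\<Rightarrow>real) \<Rightarrow> (nat\<Rightarrow>real) list \<Rightarrow> real) \<Rightarrow> real \<Rightarrow> nat set set \<Rightarrow> real" where
  "Acoef n Th m = (SOME a. \<forall>Vs. length Vs = n \<and> set Vs \<subseteq> Sm {0..<Suc n} \<longrightarrow>
      Th {0..<Suc n} (unif {0..<Suc n} (m / real (Suc n))) Vs =
      (\<Sum>P\<in>partitions n. a P * tau_part {0..<Suc n} (unif {0..<Suc n} (m / real (Suc n))) Vs P))"

lemma Acoef_spec:
  assumes cong: "congruent_family_M n Th"
    and fld: "\<And>I. finite I \<Longrightarrow> I \<noteq> {} \<Longrightarrow> tensor_field (Mplus I) (Sm I) n (Th I)"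
    and m: "m > 0"
  shows "\<forall>Vs. length Vs = n \<and> set Vs \<subseteq> Sm {0..<Suc n} \<longrightarrow>
      Th {0..<Suc n} (unif {0..<Suc n} (m / real (Suc n))) Vs =
      (\<Sum>P\<in>partitions n. Acoef n Th m P * tau_part {0..<Suc n} (unif {0..<Suc n} (m / real (Suc n))) Vs P)"
proof -
  have "\<exists>a. \<forall>Vs. length Vs = n \<and> set Vs \<subseteq> Sm {0..<Suc n} \<longrightarrow>
      Th {0..<Suc n} (unif {0..<Suc n} (m / real (Suc n))) Vs =
      (\<Sum>P\<in>partitions n. a P * tau_part {0..<Suc n} (unif {0..<Suc n} (m / real (Suc n))) Vs P)"
    by (rule unif_decomp[OF cong fld]) (use m in auto)
  then show ?thesis unfolding Acoef_def by (rule someI_ex)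
qed

lemma rational_case:
  assumes cong: "congruent_family_M n Th"
    and fld: "\<And>I. finite I \<Longrightarrow> I \<noteq> {} \<Longrightarrow> tensor_field (Mplus I) (Sm I) n (Th I)"
    and I: "finite I" "I \<noteq> {}" and k: "\<forall>i\<in>I. k i \<ge> 1" and m: "m > 0"
    and mu: "mu = (\<lambda>i. if i \<in> I then m * real (k i) / real (\<Sum>i\<in>I. k i) else 0)"
    and Vs: "length Vs = n" "set Vs \<subseteq> Sm I"
  shows "Th I mu Vs = (\<Sum>P\<in>partitions n. Acoef n Th m P * tau_part I mu Vs P)"
proof -
  define N where "N = (\<Sum>i\<in>I. k i)"
  have N: "N \<ge> 1"
  proof -
    obtain i where i: "i \<in> I" using I(2) by blast
    have "k i \<le> N" unfolding N_def using I(1) i by (auto intro: member_le_sum)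
    then show ?thesis using k i by auto
  qed
  define R where "R = {0..<Suc n}"
  define cR where "cR = m / real (Suc n)"
  define c0 where "c0 = m / (real N * real (Suc n))"
  have c0: "c0 > 0" unfolding c0_def using m N by simp
  define k1 where "k1 i = k i * Suc n" for i
  define k2 where "k2 = (\<lambda>_::nat. N)"
  define W1 where "W1 = sW I k1"
  define W2 where "W2 = sW R k2"
  have k1: "\<forall>i\<in>I. k1 i \<ge> 1" using k unfolding k1_def by (auto simp: Suc_le_eq)
  have k2: "\<forall>i\<in>R. k2 i \<ge> 1" using N unfolding k2_def by simp
  have R: "finite R" "R \<noteq> {}" "card R \<ge> n" unfolding R_def by auto
  have W1: "finite W1" "W1 \<noteq> {}" unfolding W1_def using sW_finite I sW_nonempty k1 by auto
  have W2: "finite W2" "W2 \<noteq> {}" unfolding W2_def using sW_finite R sW_nonempty k2 by auto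
  have "card W1 = N * Suc n" unfolding W1_def sW_card[OF I(1)] k1_def N_def by (simp add: sum_distrib_right sum.distrib)
  moreover have "card W2 = N * Suc n" using sW_card[OF R(1), of k2] unfolding W2_def k2_def R_def by simp
  ultimately obtain \<sigma> where \<sigma>: "bij_betw \<sigma> W2 W1" using finite_same_card_bij W1(1) W2(1) by metis
  have K1: "congruent_kernel I W1 (sK k1)" unfolding W1_def by (rule split_kernel[OF I(1) k1])
  have K2: "congruent_kernel R W2 (sK k2)" unfolding W2_def by (rule split_kernel[OF R(1) k2])
  have K3: "congruent_kernel W2 W1 (bk \<sigma>)" by (rule bij_kernel(1)[OF \<sigma> W2(1) W1(1)])
  have M1: "push I W1 (sK k1) ` Mplus I \<subseteq> Mplus W1" unfolding W1_def by (rule split_Mplus[OF I(1) k1])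
  have M2: "push R W2 (sK k2) ` Mplus R \<subseteq> Mplus W2" unfolding W2_def by (rule split_Mplus[OF R(1) k2])
  have M3: "push W2 W1 (bk \<sigma>) ` Mplus W2 \<subseteq> Mplus W1" by (rule bij_push_Mplus[OF \<sigma> W2(1) W1(1)])
  have muI: "mu i = m * real (k i) / real N" if "i \<in> I" for i unfolding mu N_def using that by simp
  have "mu i > 0" if "i \<in> I" for i
    unfolding muI[OF that] using m k N that by (intro divide_pos_pos mult_pos_pos) auto
  moreover have "mu \<in> Sm I" unfolding mu Sm_def by simp
  ultimately have muM: "mu \<in> Mplus I" unfolding Mplus_def by auto
  have uR: "unif R cR \<in> Mplus R" using unif_Mplus m unfolding cR_def by simp
  have uW2: "unif W2 c0 \<in> Mplus W2" using unif_Mplus c0 by simp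
  have p1: "push I W1 (sK k1) mu = unif W1 c0"
  proof
    fix w show "push I W1 (sK k1) mu w = unif W1 c0 w"
    proof (cases "w \<in> W1")
      case True
      let ?i = "fst (prod_decode w)"
      have i: "?i \<in> I" using True sW_kappa unfolding W1_def by blast
      have ki: "real (k ?i) > 0" using k i by auto
      have "push I W1 (sK k1) mu w = mu ?i / real (k1 ?i)"
        using split_push[OF I(1), of w k1] True unfolding W1_def by simp
      also have "real (k1 ?i) = real (k ?i) * real (Suc n)" unfolding k1_def by (simp only: of_nat_mult)
      also have "mu ?i / (real (k ?i) * real (Suc n)) = c0"
        unfolding muI[OF i] c0_def using ki N by (simp add: field_simps del: of_nat_Suc)
      finally show ?thesis using True by (simp add: unif_def)
    qed (simp add: push_def unif_def)
  qed
  have p2: "push R W2 (sK k2) (unif R cR) = unif W2 c0"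
  proof
    fix w show "push R W2 (sK k2) (unif R cR) w = unif W2 c0 w"
    proof (cases "w \<in> W2")
      case True
      let ?i = "fst (prod_decode w)"
      have i: "?i \<in> R" using True sW_kappa unfolding W2_def by blast
      have "push R W2 (sK k2) (unif R cR) w = unif R cR ?i / real (k2 ?i)"
        using split_push[OF R(1), of w k2] True unfolding W2_def by simp
      also have "\<dots> = c0" unfolding unif_def c0_def cR_def k2_def using i by simp
      finally show ?thesis using True by (simp add: unif_def)
    qed (simp add: push_def unif_def)
  qed
  have p3: "push W2 W1 (bk \<sigma>) (unif W2 c0) = unif W1 c0" by (rule bij_push_unif[OF \<sigma> W2(1) W1(1)])
  obtain b where b: "\<And>Vs. length Vs = n \<Longrightarrow> set Vs \<subseteq> Sm W1 \<Longrightarrow>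
      Th W1 (unif W1 c0) Vs = (\<Sum>P\<in>partitions n. b P * tau_part W1 (unif W1 c0) Vs P)"
    using unif_decomp[OF cong fld[OF W1] W1 c0] by blast
  have eqR: "(\<Sum>P\<in>partitions n. Acoef n Th m P * tau_part R (unif R cR) Vs' P) =
             (\<Sum>P\<in>partitions n. b P * tau_part R (unif R cR) Vs' P)"
    if Vs': "length Vs' = n" "set Vs' \<subseteq> Sm R" for Vs'
  proof -
    let ?V2 = "map (push R W2 (sK k2)) Vs'"
    let ?V3 = "map (push W2 W1 (bk \<sigma>)) ?V2"
    have "(\<Sum>P\<in>partitions n. Acoef n Th m P * tau_part R (unif R cR) Vs' P) = Th R (unif R cR) Vs'"
      using Acoef_spec[OF cong fld m] Vs' unfolding R_def cR_def by simp
    also have "\<dots> = Th W2 (push R W2 (sK k2) (unif R cR)) ?V2"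
      by (rule cong_apply[OF cong R(1,2) W2 K2 M2 uR Vs', symmetric])
    also have "\<dots> = Th W2 (unif W2 c0) ?V2" unfolding p2 ..
    also have "\<dots> = Th W1 (push W2 W1 (bk \<sigma>) (unif W2 c0)) ?V3"
      by (rule cong_apply[OF cong W2 W1 K3 M3 uW2, symmetric]) (use Vs' map_push_Sm push_Sm in auto)
    also have "\<dots> = Th W1 (unif W1 c0) ?V3" unfolding p3 ..
    also have "\<dots> = (\<Sum>P\<in>partitions n. b P * tau_part W1 (unif W1 c0) ?V3 P)"
      by (rule b) (use Vs' map_push_Sm push_Sm in auto)
    also have "\<dots> = (\<Sum>P\<in>partitions n. b P * tau_part W1 (push W2 W1 (bk \<sigma>) (unif W2 c0)) ?V3 P)"
      unfolding p3 ..
    also have "\<dots> = (\<Sum>P\<in>partitions n. b P * tau_part W2 (unif W2 c0) ?V2 P)"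
      by (rule tau_sum_push[OF W2(1) W1(1) K3 uW2 M3]) (use Vs' in simp)
    also have "\<dots> = (\<Sum>P\<in>partitions n. b P * tau_part W2 (push R W2 (sK k2) (unif R cR)) ?V2 P)"
      unfolding p2 ..
    also have "\<dots> = (\<Sum>P\<in>partitions n. b P * tau_part R (unif R cR) Vs' P)"
      by (rule tau_sum_push[OF R(1) W2(1) K2 uR M2 Vs'(1)])
    finally show ?thesis .
  qed
  have ab: "Acoef n Th m P = b P" if "P \<in> partitions n" for P
    using unif_unique[OF R(1,3), of cR "Acoef n Th m" b] eqR that m unfolding cR_def by auto
  have "Th I mu Vs = Th W1 (push I W1 (sK k1) mu) (map (push I W1 (sK k1)) Vs)"
    by (rule cong_apply[OF cong I W1 K1 M1 muM Vs, symmetric])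
  also have "\<dots> = (\<Sum>P\<in>partitions n. b P * tau_part W1 (push I W1 (sK k1) mu) (map (push I W1 (sK k1)) Vs) P)"
    unfolding p1 by (rule b) (use Vs map_push_Sm push_Sm in auto)
  also have "\<dots> = (\<Sum>P\<in>partitions n. b P * tau_part I mu Vs P)"
    by (rule tau_sum_push[OF I(1) W1(1) K1 muM M1 Vs(1)])
  also have "\<dots> = (\<Sum>P\<in>partitions n. Acoef n Th m P * tau_part I mu Vs P)"
    using ab by (intro sum.cong) auto
  finally show ?thesis .
qed


lemma fun_tendsto:
  fixes f :: "'a \<Rightarrow> nat \<Rightarrow> real"
  assumes "\<And>i. ((\<lambda>j. f j i) \<longlongrightarrow> l i) F"
  shows "(f \<longlongrightarrow> l) F"
proof -
  have "limitin (product_topology (\<lambda>i. euclidean) UNIV) f l F"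
    unfolding limitin_componentwise using assms by simp
  then show ?thesis unfolding euclidean_product_topology limitin_canonical_iff .
qed

lemma floor_tendsto:
  assumes "x \<ge> (0::real)"
  shows "(\<lambda>j. real (nat \<lfloor>real (Suc j) * x\<rfloor> + 1) / real (Suc j)) \<longlonglongrightarrow> x"
proof (rule tendsto_sandwich[of "\<lambda>j. x" _ _ "\<lambda>j. x + inverse (real (Suc j))"])
  have b: "x \<le> real (nat \<lfloor>real (Suc j) * x\<rfloor> + 1) / real (Suc j) \<and>
           real (nat \<lfloor>real (Suc j) * x\<rfloor> + 1) / real (Suc j) \<le> x + inverse (real (Suc j))" for j
  proof -
    define a where "a = real (Suc j) * x"
    have a0: "a \<ge> 0" unfolding a_def using assms by simp
    have fl: "real (nat \<lfloor>a\<rfloor>) = of_int \<lfloor>a\<rfloor>" using a0 by simp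
    have f1: "of_int \<lfloor>a\<rfloor> \<le> a" and f2: "a < of_int \<lfloor>a\<rfloor> + 1" using floor_correct[of a] by simp_all
    have e: "real (nat \<lfloor>a\<rfloor> + 1) = of_int \<lfloor>a\<rfloor> + 1" by (simp only: of_nat_add of_nat_1 fl)
    have l1: "a \<le> real (nat \<lfloor>a\<rfloor> + 1)" and l2: "real (nat \<lfloor>a\<rfloor> + 1) \<le> a + 1"
      unfolding e using f1 f2 by linarith+
    have s: "real (Suc j) > 0" by simp
    have "x = a / real (Suc j)" unfolding a_def using s by simp
    moreover have "x + inverse (real (Suc j)) = (a + 1) / real (Suc j)"
      unfolding a_def using s by (simp add: field_simps)
    ultimately show ?thesis using l1 l2 s unfolding a_def[symmetric]
      by (simp add: divide_right_mono)
  qed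
  show "\<forall>\<^sub>F j in sequentially. x \<le> real (nat \<lfloor>real (Suc j) * x\<rfloor> + 1) / real (Suc j)" using b by simp
  show "\<forall>\<^sub>F j in sequentially. real (nat \<lfloor>real (Suc j) * x\<rfloor> + 1) / real (Suc j) \<le> x + inverse (real (Suc j))"
    using b by simp
  show "(\<lambda>j. x) \<longlonglongrightarrow> x" by simp
  show "(\<lambda>j. x + inverse (real (Suc j))) \<longlonglongrightarrow> x"
    using tendsto_add[OF tendsto_const LIMSEQ_inverse_real_of_nat, of x] by simp
qed

lemma tau_part_tendsto:
  assumes "finite I" "\<And>i. i \<in> I \<Longrightarrow> ((\<lambda>j. nu j i) \<longlongrightarrow> mu i) F" "\<And>i. i \<in> I \<Longrightarrow> mu i \<noteq> 0"
  shows "((\<lambda>j. tau_part I (nu j) Vs P) \<longlongrightarrow> tau_part I mu Vs P) F"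
  unfolding tau_part_def tau_block_def
  by (intro tendsto_prod tendsto_sum tendsto_mult tendsto_const tendsto_power_int assms)

lemma main_a:
  assumes cong: "congruent_family_M n Th"
    and fld: "\<And>I. finite I \<Longrightarrow> I \<noteq> {} \<Longrightarrow> tensor_field (Mplus I) (Sm I) n (Th I)"
    and I: "finite I" "I \<noteq> {}" and mu: "mu \<in> Mplus I" and Vs: "length Vs = n" "set Vs \<subseteq> Sm I"
  shows "Th I mu Vs = (\<Sum>P\<in>partitions n. Acoef n Th (mnorm I mu) P * tau_part I mu Vs P)"
proof -
  define m where "m = mnorm I mu"
  have mupos: "\<And>i. i \<in> I \<Longrightarrow> mu i > 0" and mu0: "\<And>i. i \<notin> I \<Longrightarrow> mu i = 0"
    using mu unfolding Mplus_def Sm_def by auto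
  have msum: "m = (\<Sum>i\<in>I. mu i)" unfolding m_def mnorm_def by (intro sum.cong refl) (simp add: mupos abs_of_pos)
  have m: "m > 0" unfolding msum using I mupos by (intro sum_pos) auto
  define kk where "kk j i = nat \<lfloor>real (Suc j) * mu i\<rfloor> + 1" for j i
  define nu where "nu j = (\<lambda>i. if i \<in> I then m * real (kk j i) / real (\<Sum>i\<in>I. kk j i) else 0)" for j
  define q where "q j i = real (kk j i) / real (Suc j)" for j i
  have q: "((\<lambda>j. q j i) \<longlongrightarrow> mu i) sequentially" if "i \<in> I" for i
    unfolding q_def kk_def using floor_tendsto mupos[OF that] by simp
  have qs: "((\<lambda>j. \<Sum>i\<in>I. q j i) \<longlongrightarrow> m) sequentially"
    unfolding msum by (intro tendsto_sum q)
  have nuq: "nu j i = m * q j i / (\<Sum>i\<in>I. q j i)" if "i \<in> I" for i j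
  proof -
    have "(\<Sum>i\<in>I. q j i) = real (\<Sum>i\<in>I. kk j i) / real (Suc j)"
      unfolding q_def by (simp add: sum_divide_distrib)
    then show ?thesis unfolding nu_def q_def using that by (simp add: field_simps)
  qed
  have pw: "((\<lambda>j. nu j i) \<longlongrightarrow> mu i) sequentially" for i
    proof (cases "i \<in> I")
      case True
      have "((\<lambda>j. m * q j i / (\<Sum>i\<in>I. q j i)) \<longlongrightarrow> m * mu i / m) sequentially"
        by (intro tendsto_divide tendsto_mult tendsto_const q qs True) (use m in simp)
      then show ?thesis using m nuq True by simp
    next
      case False then show ?thesis unfolding nu_def using mu0 by simp
    qed
  have conv: "nu \<longlonglongrightarrow> mu" by (rule fun_tendsto[OF pw])
  have kk1: "\<forall>i\<in>I. kk j i \<ge> 1" for j unfolding kk_def by simp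
  have nuM: "nu j \<in> Mplus I" for j
  proof -
    have "(\<Sum>i\<in>I. kk j i) \<ge> 1"
    proof -
      obtain i where i: "i \<in> I" using I(2) by blast
      have "kk j i \<le> (\<Sum>i\<in>I. kk j i)" using I(1) i by (auto intro: member_le_sum)
      then show ?thesis using kk1[of j] i le_trans by blast
    qed
    then have Np: "real (\<Sum>i\<in>I. kk j i) > 0" by linarith
    have "m * real (kk j i) / real (\<Sum>i\<in>I. kk j i) > 0" if "i \<in> I" for i
    proof -
      have "real (kk j i) > 0" using kk1[of j] that by fastforce
      then show ?thesis using divide_pos_pos[OF mult_pos_pos[OF m] Np] by blast
    qed
    then show ?thesis unfolding Mplus_def Sm_def nu_def by auto
  qed
  have eq: "Th I (nu j) Vs = (\<Sum>P\<in>partitions n. Acoef n Th m P * tau_part I (nu j) Vs P)" for j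
    by (rule rational_case[OF cong fld I kk1 m nu_def Vs])
  have lim1: "(\<lambda>j. Th I (nu j) Vs) \<longlonglongrightarrow> Th I mu Vs"
  proof (rule continuous_on_tendsto_compose[OF _ conv mu])
    show "continuous_on (Mplus I) (\<lambda>x. Th I x Vs)" using fld[OF I] Vs unfolding tensor_field_def by blast
    show "\<forall>\<^sub>F x in sequentially. nu x \<in> Mplus I" using nuM by simp
  qed
  have lim2: "(\<lambda>j. \<Sum>P\<in>partitions n. Acoef n Th m P * tau_part I (nu j) Vs P) \<longlonglongrightarrow>
      (\<Sum>P\<in>partitions n. Acoef n Th m P * tau_part I mu Vs P)"
  proof (intro tendsto_sum tendsto_mult tendsto_const tau_part_tendsto I(1))
    fix i assume i: "i \<in> I"
    show "((\<lambda>j. nu j i) \<longlongrightarrow> mu i) sequentially"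
      by (rule pw)
    show "mu i \<noteq> 0" using mupos[OF i] by simp
  qed
  show ?thesis unfolding m_def[symmetric]
    using LIMSEQ_unique[OF lim1] lim2 eq by simp
qed


definition nrm :: "nat set \<Rightarrow> (nat \<Rightarrow> real) \<Rightarrow> nat \<Rightarrow> real" where
  "nrm I mu = (\<lambda>i. mu i / mnorm I mu)"

definition prj :: "nat set \<Rightarrow> (nat \<Rightarrow> real) \<Rightarrow> (nat \<Rightarrow> real) \<Rightarrow> nat \<Rightarrow> real" where
  "prj I mu V = (\<lambda>i. V i - (\<Sum>j\<in>I. V j) * mu i / mnorm I mu)"

definition ThD :: "(nat set \<Rightarrow> (nat\<Rightarrow>real) \<Rightarrow> (nat\<Rightarrow>real) list \<Rightarrow> real) \<Rightarrow> nat set \<Rightarrow> (nat\<Rightarrow>real) \<Rightarrow> (nat\<Rightarrow>real) list \<Rightarrow> real" where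
  "ThD Th I mu Vs = Th I (nrm I mu) (map (prj I mu) Vs)"

lemma mnorm_Mplus: "mu \<in> Mplus I \<Longrightarrow> mnorm I mu = (\<Sum>i\<in>I. mu i)"
  unfolding mnorm_def Mplus_def by (intro sum.cong refl) (simp add: abs_of_pos)

lemma mnorm_pos: "finite I \<Longrightarrow> I \<noteq> {} \<Longrightarrow> mu \<in> Mplus I \<Longrightarrow> mnorm I mu > 0"
  using mnorm_Mplus[of mu I] unfolding Mplus_def by (auto intro!: sum_pos)

lemma nrm_Pplus:
  assumes "finite I" "I \<noteq> {}" "mu \<in> Mplus I"
  shows "nrm I mu \<in> Pplus I"
proof -
  have M: "mnorm I mu > 0" using mnorm_pos[OF assms] .
  have "nrm I mu \<in> Mplus I" using assms(3) M unfolding Mplus_def Sm_def nrm_def by auto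
  moreover have "(\<Sum>i\<in>I. nrm I mu i) = 1"
    unfolding nrm_def using M mnorm_Mplus[OF assms(3)] by (simp add: sum_divide_distrib[symmetric])
  ultimately show ?thesis unfolding Pplus_def by simp
qed

lemma prj_S0:
  assumes "finite I" "I \<noteq> {}" "mu \<in> Mplus I" "V \<in> Sm I"
  shows "prj I mu V \<in> S0 I"
proof -
  have M: "mnorm I mu > 0" using mnorm_pos[OF assms(1-3)] .
  have "prj I mu V \<in> Sm I" using assms(3,4) unfolding prj_def Sm_def Mplus_def by auto
  moreover have "(\<Sum>i\<in>I. prj I mu V i) = 0"
  proof -
    have "(\<Sum>i\<in>I. prj I mu V i) = (\<Sum>i\<in>I. V i) - (\<Sum>j\<in>I. V j) * ((\<Sum>i\<in>I. mu i) / mnorm I mu)"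
      unfolding prj_def by (simp add: sum_subtractf sum_distrib_left sum_divide_distrib)
    also have "(\<Sum>i\<in>I. mu i) / mnorm I mu = 1" using M mnorm_Mplus[OF assms(3)] by simp
    finally show ?thesis by simp
  qed
  ultimately show ?thesis unfolding S0_def by simp
qed

lemma prj_lin: "prj I mu (\<lambda>i. a * v i + b * w i) = (\<lambda>i. a * prj I mu v i + b * prj I mu w i)"
  unfolding prj_def by (rule ext) (simp add: sum.distrib sum_distrib_left algebra_simps add_divide_distrib)

lemma prj_id: "V \<in> S0 I \<Longrightarrow> prj I mu V = V"
  unfolding prj_def S0_def by simp

lemma nrm_id: "mu \<in> Pplus I \<Longrightarrow> nrm I mu = mu"
  unfolding nrm_def Pplus_def Mplus_def mnorm_def by (auto simp: abs_of_pos)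

lemma push_lin: "push I I' K (\<lambda>i. a * v i + b * w i) = (\<lambda>i. a * push I I' K v i + b * push I I' K w i)"
  unfolding push_def by (rule ext) (simp add: sum.distrib sum_distrib_left algebra_simps)

lemma push_nrm:
  assumes "finite I" "finite I'" "congruent_kernel I I' K" "mu \<in> Mplus I"
  shows "nrm I' (push I I' K mu) = push I I' K (nrm I mu)"
proof -
  have M: "mnorm I' (push I I' K mu) = mnorm I mu" by (rule mnorm_push[OF assms])
  show ?thesis unfolding nrm_def M by (rule ext) (simp add: push_def sum_divide_distrib)
qed

lemma push_prj:
  assumes "finite I" "finite I'" "congruent_kernel I I' K" "mu \<in> Mplus I"
  shows "prj I' (push I I' K mu) (push I I' K V) = push I I' K (prj I mu V)"
proof (rule ext)
  fix i'
  have M: "mnorm I' (push I I' K mu) = mnorm I mu" by (rule mnorm_push[OF assms])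
  have S: "(\<Sum>j\<in>I'. push I I' K V j) = (\<Sum>j\<in>I. V j)" by (rule push_sum[OF assms(1-3)])
  obtain s M0 where s: "s = (\<Sum>j\<in>I. V j)" and M0: "M0 = mnorm I mu" by blast
  have l: "prj I' (push I I' K mu) (push I I' K V) i' = push I I' K V i' - s * push I I' K mu i' / M0"
    unfolding prj_def M S s M0 ..
  have r: "push I I' K (prj I mu V) i' = (if i' \<in> I' then (\<Sum>i\<in>I. K i i' * (V i - s * mu i / M0)) else 0)"
    unfolding push_def prj_def s M0 ..
  have e: "(\<Sum>i\<in>I. K i i' * (V i - s * mu i / M0)) = (\<Sum>i\<in>I. K i i' * V i) - s * (\<Sum>i\<in>I. K i i' * mu i) / M0"
    by (simp add: right_diff_distrib sum_subtractf sum_distrib_left sum_divide_distrib mult_ac)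
  show "prj I' (push I I' K mu) (push I I' K V) i' = push I I' K (prj I mu V) i'"
    unfolding l r e by (simp add: push_def)
qed

lemma push_Pplus:
  assumes "finite I" "finite I'" "congruent_kernel I I' K" "push I I' K ` Mplus I \<subseteq> Mplus I'"
  shows "push I I' K ` Pplus I \<subseteq> Pplus I'"
proof
  fix y assume "y \<in> push I I' K ` Pplus I"
  then obtain x where x: "x \<in> Pplus I" "y = push I I' K x" by blast
  have "y \<in> Mplus I'" using x assms(4) unfolding Pplus_def by auto
  moreover have "(\<Sum>i\<in>I'. y i) = 1" using x push_sum[OF assms(1-3), of x] unfolding Pplus_def by simp
  ultimately show "y \<in> Pplus I'" unfolding Pplus_def by simp
qed

lemma ThD_congruent:
  assumes congP: "congruent_family_P n Th"
  shows "congruent_family_M n (ThD Th)"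
  unfolding congruent_family_M_def
proof (intro allI impI ballI)
  fix I I' K mu Vs
  assume h: "finite I \<and> I \<noteq> {} \<and> finite I' \<and> I' \<noteq> {} \<and> congruent_kernel I I' K \<and> push I I' K ` Mplus I \<subseteq> Mplus I'"
    and mu: "mu \<in> Mplus I" and Vs: "length Vs = n \<and> set Vs \<subseteq> Sm I"
  have A: "finite I" "I \<noteq> {}" "finite I'" "I' \<noteq> {}" "congruent_kernel I I' K" "push I I' K ` Mplus I \<subseteq> Mplus I'"
    using h by auto
  have mp: "map (prj I' (push I I' K mu)) (map (push I I' K) Vs) = map (push I I' K) (map (prj I mu) Vs)"
    using push_prj[OF A(1,3,5) mu] by simp
  have "ThD Th I' (push I I' K mu) (map (push I I' K) Vs) =
      Th I' (push I I' K (nrm I mu)) (map (push I I' K) (map (prj I mu) Vs))"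
    unfolding ThD_def push_nrm[OF A(1,3,5) mu] mp by (rule refl)
  also have "\<dots> = Th I (nrm I mu) (map (prj I mu) Vs)"
    using congP A push_Pplus[OF A(1,3,5,6)] nrm_Pplus[OF A(1,2) mu] prj_S0[OF A(1,2) mu] Vs
    unfolding congruent_family_P_def by (smt (verit) imageE length_map list.set_map subset_eq)
  finally show "ThD Th I' (push I I' K mu) (map (push I I' K) Vs) = ThD Th I mu Vs"
    unfolding ThD_def .
qed


lemma S0_basis:
  assumes "finite I" "i0 \<in> I" "W \<in> S0 I"
  shows "W = (\<lambda>i. \<Sum>j\<in>I-{i0}. W j * (dl j i - dl i0 i))"
proof (rule ext)
  fix i
  have W0: "\<And>i. i \<notin> I \<Longrightarrow> W i = 0" and Ws: "(\<Sum>j\<in>I. W j) = 0" using assms(3) unfolding S0_def Sm_def by auto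
  have split: "(\<Sum>j\<in>I-{i0}. W j * (dl j i - dl i0 i)) = (\<Sum>j\<in>I-{i0}. W j * dl j i) - (\<Sum>j\<in>I-{i0}. W j) * dl i0 i"
    by (simp add: right_diff_distrib sum_subtractf sum_distrib_right)
  have rest: "(\<Sum>j\<in>I-{i0}. W j) = - W i0"
    using Ws assms(1,2) by (simp add: sum_diff1)
  show "W i = (\<Sum>j\<in>I-{i0}. W j * (dl j i - dl i0 i))"
  proof (cases "i = i0")
    case True
    have "(\<Sum>j\<in>I-{i0}. W j * dl j i) = 0" using True by (intro sum.neutral) (auto simp: dl_def)
    then show ?thesis unfolding split rest using True by (simp add: dl_def)
  next
    case False
    have "(\<Sum>j\<in>I-{i0}. W j * dl j i) = (\<Sum>j\<in>I-{i0}. if j = i then W j else 0)"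
      by (intro sum.cong refl) (simp add: dl_def)
    also have "\<dots> = (if i \<in> I then W i else 0)"
      using assms(1) False by (simp add: sum.delta)
    finally have d: "(\<Sum>j\<in>I-{i0}. W j * dl j i) = (if i \<in> I then W i else 0)" .
    have "dl i0 i = 0" using False by (simp add: dl_def)
    then show ?thesis unfolding split rest d using W0 by simp
  qed
qed

lemma ThD_field:
  assumes fldP: "\<And>I. finite I \<Longrightarrow> I \<noteq> {} \<Longrightarrow> tensor_field (Pplus I) (S0 I) n (Th I)"
    and I: "finite I" "I \<noteq> {}"
  shows "tensor_field (Mplus I) (Sm I) n (ThD Th I)"
  unfolding tensor_field_def
proof (intro conjI allI impI ballI)
  have fP: "tensor_field (Pplus I) (S0 I) n (Th I)" by (rule fldP[OF I])
  fix mu Vs k v w a b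
  assume mu: "mu \<in> Mplus I" and h: "length Vs = n \<and> set Vs \<subseteq> Sm I \<and> k < n \<and> v \<in> Sm I \<and> w \<in> Sm I"
  have pv: "prj I mu v \<in> S0 I" "prj I mu w \<in> S0 I" using prj_S0[OF I mu] h by auto
  have pV: "set (map (prj I mu) Vs) \<subseteq> S0 I" using prj_S0[OF I mu] h by auto
  have "ThD Th I mu (Vs[k := (\<lambda>i. a * v i + b * w i)]) =
     Th I (nrm I mu) ((map (prj I mu) Vs)[k := (\<lambda>i. a * prj I mu v i + b * prj I mu w i)])"
    unfolding ThD_def map_update prj_lin ..
  also have "\<dots> = a * Th I (nrm I mu) ((map (prj I mu) Vs)[k := prj I mu v]) + b * Th I (nrm I mu) ((map (prj I mu) Vs)[k := prj I mu w])"
    using fP nrm_Pplus[OF I mu] pv pV h unfolding tensor_field_def by simp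
  finally show "ThD Th I mu (Vs[k := (\<lambda>i. a * v i + b * w i)]) = a * ThD Th I mu (Vs[k := v]) + b * ThD Th I mu (Vs[k := w])"
    unfolding ThD_def map_update .
next
  have fP: "tensor_field (Pplus I) (S0 I) n (Th I)" by (rule fldP[OF I])
  fix Vs assume Vs: "length Vs = n \<and> set Vs \<subseteq> Sm I"
  obtain i0 where i0: "i0 \<in> I" using I(2) by blast
  define J where "J = I - {i0}"
  define e where "e j = (\<lambda>i. dl j i - dl i0 i)" for j
  have eS: "e j \<in> S0 I" if "j \<in> J" for j
  proof -
    have "e j \<in> Sm I" using that i0 unfolding e_def dl_def Sm_def J_def by auto
    moreover have "(\<Sum>i\<in>I. e j i) = 0" using that i0 I(1) unfolding e_def dl_def J_def
      by (simp add: sum_subtractf)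
    ultimately show ?thesis unfolding S0_def by simp
  qed
  have fJ: "finite J" unfolding J_def using I(1) by simp
  have exp: "ThD Th I mu Vs = (\<Sum>g\<in>PiE {0..<n} (\<lambda>_. J). (\<Prod>k<n. prj I mu (Vs ! k) (g k)) *
       Th I (nrm I mu) (map (\<lambda>k. e (g k)) [0..<n]))" if mu: "mu \<in> Mplus I" for mu
    unfolding ThD_def
  proof (rule ml_expand[OF tensor_field_ml[OF fP nrm_Pplus[OF I mu]] lin_S0 _ _ fJ eS])
    show "length (map (prj I mu) Vs) = n" using Vs by simp
    show "set (map (prj I mu) Vs) \<subseteq> S0 I" using prj_S0[OF I mu] Vs by auto
    fix k assume k: "k < n"
    have "Vs ! k \<in> Sm I" using Vs k nth_mem by fastforce
    then have "map (prj I mu) Vs ! k \<in> S0 I" using prj_S0[OF I mu] Vs k by auto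
    then show "map (prj I mu) Vs ! k = (\<lambda>i. \<Sum>j\<in>J. prj I mu (Vs ! k) j * e j i)"
      using S0_basis[OF I(1) i0] k Vs unfolding J_def e_def by simp
  qed
  have cmn: "continuous_on (Mplus I) (\<lambda>mu. mnorm I mu)"
    unfolding mnorm_def
    by (intro continuous_intros continuous_on_subset[OF continuous_on_product_coordinates]) auto
  have cco: "continuous_on (Mplus I) (\<lambda>mu. mu j)" for j
    by (rule continuous_on_subset[OF continuous_on_product_coordinates]) auto
  have mnz: "\<forall>mu\<in>Mplus I. mnorm I mu \<noteq> 0" using mnorm_pos[OF I] by fastforce
  have cprj: "continuous_on (Mplus I) (\<lambda>mu. prj I mu V j)" for V j
    unfolding prj_def by (intro continuous_intros cco cmn mnz)
  have cnrm: "continuous_on (Mplus I) (nrm I)"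
    unfolding nrm_def by (intro continuous_on_coordinatewise_then_product continuous_intros cco cmn mnz)
  have cTh: "continuous_on (Mplus I) (\<lambda>mu. Th I (nrm I mu) (map (\<lambda>k. e (g k)) [0..<n]))"
    if g: "g \<in> PiE {0..<n} (\<lambda>_. J)" for g
  proof (rule continuous_on_compose2[OF _ cnrm])
    show "continuous_on (Pplus I) (\<lambda>nu. Th I nu (map (\<lambda>k. e (g k)) [0..<n]))"
    proof -
      have "set (map (\<lambda>k. e (g k)) [0..<n]) \<subseteq> S0 I" using eS g by (auto simp: PiE_iff)
      then show ?thesis using fP unfolding tensor_field_def by simp
    qed
    show "nrm I ` Mplus I \<subseteq> Pplus I" using nrm_Pplus[OF I] by blast
  qed
  have "continuous_on (Mplus I) (\<lambda>mu. \<Sum>g\<in>PiE {0..<n} (\<lambda>_. J). (\<Prod>k<n. prj I mu (Vs ! k) (g k)) *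
       Th I (nrm I mu) (map (\<lambda>k. e (g k)) [0..<n]))"
    by (intro continuous_on_sum continuous_on_mult continuous_on_prod cprj cTh)
  then show "continuous_on (Mplus I) (\<lambda>mu. ThD Th I mu Vs)"
    by (rule continuous_on_cong[THEN iffD1, rotated 2]) (use exp in auto)
qed

lemma repr_cong_M:
  assumes "\<forall>I. finite I \<and> I \<noteq> {} \<longrightarrow> (\<forall>mu\<in>Mplus I. \<forall>Vs. length Vs = n \<and> set Vs \<subseteq> Sm I \<longrightarrow>
       Th I mu Vs = (\<Sum>P\<in>partitions n. a P (mnorm I mu) * tau_part I mu Vs P))"
  shows "congruent_family_M n Th"
  unfolding congruent_family_M_def
proof (intro allI impI ballI)
  fix I I' K mu Vs
  assume h: "finite I \<and> I \<noteq> {} \<and> finite I' \<and> I' \<noteq> {} \<and> congruent_kernel I I' K \<and> push I I' K ` Mplus I \<subseteq> Mplus I'"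
    and mu: "mu \<in> Mplus I" and Vs: "length Vs = n \<and> set Vs \<subseteq> Sm I"
  have pm: "push I I' K mu \<in> Mplus I'" using h mu by auto
  have "Th I' (push I I' K mu) (map (push I I' K) Vs) =
      (\<Sum>P\<in>partitions n. a P (mnorm I' (push I I' K mu)) * tau_part I' (push I I' K mu) (map (push I I' K) Vs) P)"
    using assms h pm Vs map_push_Sm by auto
  also have "\<dots> = (\<Sum>P\<in>partitions n. a P (mnorm I mu) * tau_part I mu Vs P)"
    using mnorm_push[OF _ _ _ mu] tau_part_push[OF _ _ _ mu pm] h Vs by (intro sum.cong refl) auto
  also have "\<dots> = Th I mu Vs" using assms h mu Vs by auto
  finally show "Th I' (push I I' K mu) (map (push I I' K) Vs) = Th I mu Vs" .
qed

lemma map_push_S0: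
  assumes "finite I" "finite I'" "congruent_kernel I I' K" "set Vs \<subseteq> S0 I"
  shows "set (map (push I I' K) Vs) \<subseteq> S0 I'"
  using assms push_sum[OF assms(1-3)] push_Sm unfolding S0_def by auto

lemma repr_cong_P:
  assumes "\<forall>I. finite I \<and> I \<noteq> {} \<longrightarrow> (\<forall>mu\<in>Pplus I. \<forall>Vs. length Vs = n \<and> set Vs \<subseteq> S0 I \<longrightarrow>
       Th I mu Vs = (\<Sum>P\<in>Q. c P * tau_part I mu Vs P))"
    and Q: "Q \<subseteq> partitions n"
  shows "congruent_family_P n Th"
  unfolding congruent_family_P_def
proof (intro allI impI ballI)
  fix I I' K mu Vs
  assume h: "finite I \<and> I \<noteq> {} \<and> finite I' \<and> I' \<noteq> {} \<and> congruent_kernel I I' K \<and> push I I' K ` Pplus I \<subseteq> Pplus I'"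
    and mu: "mu \<in> Pplus I" and Vs: "length Vs = n \<and> set Vs \<subseteq> S0 I"
  have pm: "push I I' K mu \<in> Pplus I'" using h mu by auto
  have muM: "mu \<in> Mplus I" and pmM: "push I I' K mu \<in> Mplus I'" using mu pm unfolding Pplus_def by auto
  have "Th I' (push I I' K mu) (map (push I I' K) Vs) =
      (\<Sum>P\<in>Q. c P * tau_part I' (push I I' K mu) (map (push I I' K) Vs) P)"
    using assms(1) h pm Vs map_push_S0[of I I' K Vs] by auto
  also have "\<dots> = (\<Sum>P\<in>Q. c P * tau_part I mu Vs P)"
    using tau_part_push[OF _ _ _ muM pmM] h Vs Q by (intro sum.cong refl) auto
  also have "\<dots> = Th I mu Vs" using assms h mu Vs by auto
  finally show "Th I' (push I I' K mu) (map (push I I' K) Vs) = Th I mu Vs" .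
qed

lemma tau_vanish:
  assumes "P \<in> partitions n" "B \<in> P" "\<not> card B > 1" "length Vs = n" "set Vs \<subseteq> S0 I"
  shows "tau_part I mu Vs P = 0"
proof -
  have Bs: "B \<subseteq> {0..<n}" "B \<noteq> {}" "finite B" using partitions_block[OF assms(1,2)] by auto
  then have "card B = 1" using assms(3) by (metis card_0_eq less_one linorder_neqE_nat)
  then obtain k where k: "B = {k}" by (rule card_1_singletonE)
  have kn: "k < n" using Bs k by auto
  have "Vs ! k \<in> set Vs" using kn assms(4) by simp
  then have "Vs ! k \<in> S0 I" using assms(5) by (rule subsetD[rotated])
  then have tb: "tau_block I mu Vs B = 0" unfolding tau_block_def k S0_def by simp
  show ?thesis unfolding tau_part_def
    by (rule prod_zero[OF partitions_finite[OF assms(1)]]) (use assms(2) tb in blast)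
qed

theorem theorem4p3:
  fixes n :: nat
    and ThM :: "nat set \<Rightarrow> (nat \<Rightarrow> real) \<Rightarrow> (nat \<Rightarrow> real) list \<Rightarrow> real"
    and ThP :: "nat set \<Rightarrow> (nat \<Rightarrow> real) \<Rightarrow> (nat \<Rightarrow> real) list \<Rightarrow> real"
  assumes fieldM: "\<And>I. finite I \<Longrightarrow> I \<noteq> {} \<Longrightarrow> tensor_field (Mplus I) (Sm I) n (ThM I)"
    and fieldP: "\<And>I. finite I \<Longrightarrow> I \<noteq> {} \<Longrightarrow> tensor_field (Pplus I) (S0 I) n (ThP I)"
  shows "(congruent_family_M n ThM \<longleftrightarrow>
            (\<exists>a :: nat set set \<Rightarrow> real \<Rightarrow> real.
               \<forall>I. finite I \<and> I \<noteq> {} \<longrightarrow>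
                 (\<forall>mu\<in>Mplus I. \<forall>Vs. length Vs = n \<and> set Vs \<subseteq> Sm I \<longrightarrow>
                    ThM I mu Vs = (\<Sum>P\<in>partitions n. a P (mnorm I mu) * tau_part I mu Vs P))))
       \<and> (congruent_family_P n ThP \<longleftrightarrow>
            (\<exists>c :: nat set set \<Rightarrow> real.
               \<forall>I. finite I \<and> I \<noteq> {} \<longrightarrow>
                 (\<forall>mu\<in>Pplus I. \<forall>Vs. length Vs = n \<and> set Vs \<subseteq> S0 I \<longrightarrow>
                    ThP I mu Vs = (\<Sum>P\<in>{P \<in> partitions n. \<forall>B\<in>P. card B > 1}.
                                     c P * tau_part I mu Vs P))))"
proof (intro conjI iffI)
  assume cong: "congruent_family_M n ThM"
  show "\<exists>a :: nat set set \<Rightarrow> real \<Rightarrow> real.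
               \<forall>I. finite I \<and> I \<noteq> {} \<longrightarrow>
                 (\<forall>mu\<in>Mplus I. \<forall>Vs. length Vs = n \<and> set Vs \<subseteq> Sm I \<longrightarrow>
                    ThM I mu Vs = (\<Sum>P\<in>partitions n. a P (mnorm I mu) * tau_part I mu Vs P))"
  proof (intro exI[of _ "\<lambda>P m. Acoef n ThM m P"] allI impI ballI)
    fix I mu Vs assume I: "finite I \<and> I \<noteq> {}" and mu: "mu \<in> Mplus I" and Vs: "length Vs = n \<and> set Vs \<subseteq> Sm I"
    show "ThM I mu Vs = (\<Sum>P\<in>partitions n. Acoef n ThM (mnorm I mu) P * tau_part I mu Vs P)"
      using I Vs by (intro main_a[OF cong fieldM _ _ mu]) auto
  qed
next
  assume "\<exists>a :: nat set set \<Rightarrow> real \<Rightarrow> real.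
               \<forall>I. finite I \<and> I \<noteq> {} \<longrightarrow>
                 (\<forall>mu\<in>Mplus I. \<forall>Vs. length Vs = n \<and> set Vs \<subseteq> Sm I \<longrightarrow>
                    ThM I mu Vs = (\<Sum>P\<in>partitions n. a P (mnorm I mu) * tau_part I mu Vs P))"
  then obtain a where a: "\<forall>I. finite I \<and> I \<noteq> {} \<longrightarrow>
                 (\<forall>mu\<in>Mplus I. \<forall>Vs. length Vs = n \<and> set Vs \<subseteq> Sm I \<longrightarrow>
                    ThM I mu Vs = (\<Sum>P\<in>partitions n. a P (mnorm I mu) * tau_part I mu Vs P))" by blast
  show "congruent_family_M n ThM" by (rule repr_cong_M[OF a])
next
  assume cong: "congruent_family_P n ThP"
  have congD: "congruent_family_M n (ThD ThP)" by (rule ThD_congruent[OF cong])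
  have fldD: "\<And>I. finite I \<Longrightarrow> I \<noteq> {} \<Longrightarrow> tensor_field (Mplus I) (Sm I) n (ThD ThP I)"
    by (rule ThD_field[OF fieldP])
  define c where "c = Acoef n (ThD ThP) 1"
  show "\<exists>c :: nat set set \<Rightarrow> real.
               \<forall>I. finite I \<and> I \<noteq> {} \<longrightarrow>
                 (\<forall>mu\<in>Pplus I. \<forall>Vs. length Vs = n \<and> set Vs \<subseteq> S0 I \<longrightarrow>
                    ThP I mu Vs = (\<Sum>P\<in>{P \<in> partitions n. \<forall>B\<in>P. card B > 1}.
                                     c P * tau_part I mu Vs P))"
  proof (intro exI[of _ c] allI impI ballI)
    fix I mu Vs
    assume I: "finite I \<and> I \<noteq> {}" and mu: "mu \<in> Pplus I" and Vs: "length Vs = n \<and> set Vs \<subseteq> S0 I"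
    have muM: "mu \<in> Mplus I" using mu unfolding Pplus_def by simp
    have VsM: "set Vs \<subseteq> Sm I" using Vs unfolding S0_def by auto
    have m1: "mnorm I mu = 1" using mu mnorm_Mplus[OF muM] unfolding Pplus_def by simp
    have "ThP I mu Vs = ThD ThP I mu Vs"
    proof -
      have "map (prj I mu) Vs = Vs" using Vs prj_id by (intro map_idI) blast
      then show ?thesis unfolding ThD_def nrm_id[OF mu] by simp
    qed
    also have "\<dots> = (\<Sum>P\<in>partitions n. c P * tau_part I mu Vs P)"
      using main_a[OF congD fldD _ _ muM, of Vs] I Vs VsM unfolding c_def m1 by simp
    also have "\<dots> = (\<Sum>P\<in>{P \<in> partitions n. \<forall>B\<in>P. card B > 1}. c P * tau_part I mu Vs P)"
    proof (rule sum.mono_neutral_right[OF partitions_finite_set])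
      show "{P \<in> partitions n. \<forall>B\<in>P. card B > 1} \<subseteq> partitions n" by blast
      show "\<forall>P\<in>partitions n - {P \<in> partitions n. \<forall>B\<in>P. card B > 1}. c P * tau_part I mu Vs P = 0"
      proof
        fix P assume P: "P \<in> partitions n - {P \<in> partitions n. \<forall>B\<in>P. card B > 1}"
        then obtain B where B: "B \<in> P" "\<not> card B > 1" by blast
        have "tau_part I mu Vs P = 0" using tau_vanish[of P n B Vs I mu] P B Vs by blast
        then show "c P * tau_part I mu Vs P = 0" by simp
      qed
    qed
    finally show "ThP I mu Vs = (\<Sum>P\<in>{P \<in> partitions n. \<forall>B\<in>P. card B > 1}. c P * tau_part I mu Vs P)" .
  qed
next
  assume "\<exists>c :: nat set set \<Rightarrow> real.
               \<forall>I. finite I \<and> I \<noteq> {} \<longrightarrow>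
                 (\<forall>mu\<in>Pplus I. \<forall>Vs. length Vs = n \<and> set Vs \<subseteq> S0 I \<longrightarrow>
                    ThP I mu Vs = (\<Sum>P\<in>{P \<in> partitions n. \<forall>B\<in>P. card B > 1}.
                                     c P * tau_part I mu Vs P))"
  then obtain c where c: "\<forall>I. finite I \<and> I \<noteq> {} \<longrightarrow>
                 (\<forall>mu\<in>Pplus I. \<forall>Vs. length Vs = n \<and> set Vs \<subseteq> S0 I \<longrightarrow>
                    ThP I mu Vs = (\<Sum>P\<in>{P \<in> partitions n. \<forall>B\<in>P. card B > 1}.
                                     c P * tau_part I mu Vs P))" by blast
  show "congruent_family_P n ThP" by (rule repr_cong_P[OF c]) blast
qed

end
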